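(* Let $\langle\mathcal{P},\mathcal{S}\rangle$ be an ADP problem with $\mathcal{P}=\mathcal{P}'\uplus\{\alpha\}$ for $\alpha=\ell\to\{p_1:r_1,\dots,p_k:r_k\}^m$, let $1\le j\le k$, and let $t\trianglelefteq_\sharp r_j$. Let $\delta_1,\dots,\delta_d$ be all narrowing substitutions of $t$. Then $\mathrm{Proc}_{\mathtt{ROI}}(\langle\mathcal{P},\mathcal{S}\rangle)=(\mathrm{Pol}_0,\{\langle\mathcal{P}'\cup N,\widetilde{\mathcal{S}}\rangle\})$ is sound, where \[N=\{\ell\delta_e\to\{p_1:r_1\delta_e,\dots,p_k:r_k\delta_e\}^m\mid1\le e\le d\}\cup\{\ell\to\{p_1:\sharp_{\mathrm{capt}_1(\delta_1,\dots,\delta_d)}(r_1),\dots,p_k:\sharp_{\mathrm{capt}_k(\delta_1,\dots,\delta_d)}(r_k)\}^m\}\] and $\widetilde{\mathcal{S}}=(\mathcal{S}\setminus\{\alpha\})\cup N$ if $\alpha\in\mathcal{S}$, and $\widetilde{\mathcal{S}}=\mathcal{S}$ otherwise.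
   Context: Annotated dependency pairs (ADPs): over a finite signature $\Sigma$ with fresh annotated copies $f^\sharp$ of the defined symbols, an ADP is $\ell\to\{p_1:r_1,\dots,p_k:r_k\}^m$ with $\ell$ a non-variable unannotated term, $r_j$ possibly annotated, $\mathcal{V}(r_j)\subseteq\mathcal{V}(\ell)$, $0<p_j\le1$, $\sum p_j=1$, flag $m\in\{\mathsf{true},\mathsf{false}\}$. For a set $\mathcal{P}$, defined symbols are roots of left-hand sides; basic terms are $f(t_1,\dots,t_k)$ with $f$ defined, $t_i$ free of defined symbols; $|t|$ term size; $\flat$ removes annotations; $t^\sharp$ annotates the root; $\sharp_\Phi(t)$ annotates exactly the positions in $\Phi$ and removes all other annotations; $\flat^\uparrow_\pi$ removes annotations strictly above $\pi$; $t\trianglelefteq_\sharp^\pi s$ means $s$ has an annotated symbol at $\pi$ and $t=\flat(s|_\pi)$, and $t\trianglelefteq_\sharp s$ means this holds for some $\pi$. Rewriting with $\mathcal{P}$ (innermost): at a position $\pi$ with defined or annotated symbol, ADP $\ell\to\{p_j:r_j\}^m\in\mathcal{P}$, $\sigma$ with $\flat(s|_\pi)=\ell\sigma$ whose proper subterms are normal forms: $t_j=s[r_j\sigma]_\pi$ (at: $m=\mathsf{true}$, $\pi$ annotated), $s[\flat(r_j)\sigma]_\pi$ (nt), $\flat^\uparrow_\pi(s[r_j\sigma]_\pi)$ (af), $\flat^\uparrow_\pi(s[\flat(r_j)\sigma]_\pi)$ (nf). A term is in argument normal form w.r.t. $\mathcal{P}$ if all its proper subterms are normal forms. $\mathcal{P}$-chain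 trees: possibly infinite finitely-branching trees with nodes $(p_v:t_v)$, root probability 1, $t_v$ rewriting to $\{\tfrac{p_w}{p_v}:t_w\}_w$ at inner nodes. For $\mathcal{S}\subseteq\mathcal{P}$, $\operatorname{edl}_{\langle\mathcal{P},\mathcal{S}\rangle}(\mathfrak{T})$ sums $p_v$ over inner nodes rewritten by (at)/(af)-steps with ADPs in $\mathcal{S}$; $\operatorname{edh}_{\langle\mathcal{P},\mathcal{S}\rangle}(t)$ = sup over chain trees rooted at $t^\sharp$; $\iota_{\langle\mathcal{P},\mathcal{S}\rangle}=\iota(n\mapsto\sup\{\operatorname{edh}_{\langle\mathcal{P},\mathcal{S}\rangle}(t)\mid t\text{ basic},|t|\le n\})$; complexities $\mathfrak{C}=\{\mathrm{Pol}_0,\mathrm{Pol}_1,\dots,\mathrm{Exp},\mathrm{2\text{-}Exp},\mathrm{Fin},\omega\}$ ordered in that order, $\oplus$ = maximum, $\iota(f)=\mathrm{Pol}_a$ for least $a$ with $f\in O(n^a)$, else $\mathrm{Exp}$ if $f\in O(2^{\mathrm{pol}(n)})$, else $\mathrm{2\text{-}Exp}$ if $f\in O(2^{2^{\mathrm{pol}(n)}})$, else $\mathrm{Fin}$ if $f$ never equals $\omega$, else $\omega$. Narrowing substitutions: for the ADP $\alpha$ with left-hand side $\ell$ and a term $t\trianglelefteq_\sharp r_j$, a substitution $\delta$ is a narrowing substitution of $t$ if there is a non-variable position $\tau$ of $t$ and a variable-renamed ADP $\ell'\to\dots\in\mathcal{P}$ such that $\delta$ is a most general unifier of $t|_\tau$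 and $\ell'$ and both $\ell\delta$ and $\ell'\delta$ are in argument normal form w.r.t. $\mathcal{P}$. A term $t'$ is captured by $\delta_1,\dots,\delta_d$ if for every narrowing substitution $\rho$ of $t'$ there is $1\le e\le d$ and a substitution $\rho'$ with $\rho=\delta_e\rho'$. For $1\le i\le k$, $\mathrm{capt}_i(\delta_1,\dots,\delta_d)$ is the set of all positions $\pi$ with $t'\trianglelefteq_\sharp^\pi r_i$ for some $t'$ that is not captured by $\delta_1,\dots,\delta_d$. ADP problems, proof trees, soundness: ADP problem $\langle\mathcal{P},\mathcal{S}\rangle$, $\mathcal{P}$ finite, $\mathcal{S}\subseteq\mathcal{P}$, solved iff $\mathcal{S}=\emptyset$. A processor maps an ADP problem to $(c,\{\langle\mathcal{P}_1,\mathcal{S}_1\rangle,\dots,\langle\mathcal{P}_n,\mathcal{S}_n\rangle\})$. A proof tree is a finite tree with labels $L_{\mathcal{A}}$ (ADP problems), $L_{\mathcal{C}}$ (complexities) where each inner node and its children arise by a processor application and leaves carry $\mathrm{Pol}_0$ if solved, $\omega$ otherwise; it is well formed if for each node $v$ with $L_{\mathcal{A}}(v)=\langle\mathcal{P},\mathcal{S}\rangle$ and root path $v_1,\dots,v_k=v$: $\iota_{\langle\mathcal{P},\mathcal{S}\rangle}\sqsubseteq L_{\mathcal{C}}(v_1)\oplus\dots\oplus L_{\mathcal{C}}(v_{k-1})\oplus\max\{L'_{\mathcal{C}}(w)\mid w$ reachable from $v$, incl. $v\}$ and $\iota_{\langle\mathcal{P},\mathcal{P}\setminus\mathcal{S}\rangle}\sqsubseteq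 L_{\mathcal{C}}(v_1)\oplus\dots\oplus L_{\mathcal{C}}(v_{k-1})$ ($L'_{\mathcal{C}}=L_{\mathcal{C}}$ on inner nodes, $\iota_{L_{\mathcal{A}}(w)}$ on leaves). A processor with output $(c,\{\langle\mathcal{P}_i,\mathcal{S}_i\rangle\}_{i\le n})$ on $\langle\mathcal{P},\mathcal{S}\rangle$ is sound if for every well-formed proof tree and node $v$ labeled $\langle\mathcal{P},\mathcal{S}\rangle$ with root path $v_1,\dots,v_k=v$: $\iota_{\langle\mathcal{P},\mathcal{S}\rangle}\sqsubseteq L_{\mathcal{C}}(v_1)\oplus\dots\oplus L_{\mathcal{C}}(v_{k-1})\oplus c\oplus\iota_{\langle\mathcal{P}_1,\mathcal{S}_1\rangle}\oplus\dots\oplus\iota_{\langle\mathcal{P}_n,\mathcal{S}_n\rangle}$ and $\iota_{\langle\mathcal{P}_i,\mathcal{P}_i\setminus\mathcal{S}_i\rangle}\sqsubseteq L_{\mathcal{C}}(v_1)\oplus\dots\oplus L_{\mathcal{C}}(v_{k-1})\oplus c$ for all $i$. *)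

theory Defs
  imports "HOL-Analysis.Infinite_Sum" "HOL-Library.Extended_Nonnegative_Real"
begin

text \<open>The boolean flag of a
function node says whether the symbol is annotated (f versus f-sharp). The arity of
a symbol occurrence is the length of its argument list; the signature is a set of
pairs (symbol, arity).\<close>

datatype ('f, 'v) trm = TVar 'v | TFun 'f bool "('f, 'v) trm list"

fun flat :: "('f, 'v) trm \<Rightarrow> ('f, 'v) trm" where
  "flat (TVar x) = TVar x"
| "flat (TFun f b ts) = TFun f False (map flat ts)"

fun subst :: "('v \<Rightarrow> ('f, 'v) trm) \<Rightarrow> ('f, 'v) trm \<Rightarrow> ('f, 'v) trm" where
  "subst \<sigma> (TVar x) = \<sigma> x"
| "subst \<sigma> (TFun f b ts) = TFun f b (map (subst \<sigma>) ts)"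

fun vars :: "('f, 'v) trm \<Rightarrow> 'v set" where
  "vars (TVar x) = {x}"
| "vars (TFun f b ts) = \<Union> (set (map vars ts))"

fun funas :: "('f, 'v) trm \<Rightarrow> ('f \<times> nat) set" where
  "funas (TVar x) = {}"
| "funas (TFun f b ts) = insert (f, length ts) (\<Union> (set (map funas ts)))"

fun ann_funas :: "('f, 'v) trm \<Rightarrow> ('f \<times> nat) set" where
  "ann_funas (TVar x) = {}"
| "ann_funas (TFun f b ts) = (if b then {(f, length ts)} else {}) \<union> \<Union> (set (map ann_funas ts))"

fun tsize :: "('f, 'v) trm \<Rightarrow> nat" where
  "tsize (TVar x) = 1"
| "tsize (TFun f b ts) = 1 + sum_list (map tsize ts)"

definition unannotated :: "('f, 'v) trm \<Rightarrow> bool" where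
  "unannotated t \<longleftrightarrow> flat t = t"

definition is_TFun :: "('f, 'v) trm \<Rightarrow> bool" where
  "is_TFun t \<longleftrightarrow> (\<exists>f b ts. t = TFun f b ts)"

fun sharp :: "('f, 'v) trm \<Rightarrow> ('f, 'v) trm" where
  "sharp (TVar x) = TVar x"
| "sharp (TFun f b ts) = TFun f True ts"

type_synonym pos = "nat list"

fun valid_pos :: "('f, 'v) trm \<Rightarrow> pos \<Rightarrow> bool" where
  "valid_pos t [] = True"
| "valid_pos (TVar x) (i # p) = False"
| "valid_pos (TFun f b ts) (i # p) = (i < length ts \<and> valid_pos (ts ! i) p)"

definition poss :: "('f, 'v) trm \<Rightarrow> pos set" where
  "poss t = {p. valid_pos t p}"

fun subt_at :: "('f, 'v) trm \<Rightarrow> pos \<Rightarrow> ('f, 'v) trm" where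
  "subt_at t [] = t"
| "subt_at (TVar x) (i # p) = TVar x"
| "subt_at (TFun f b ts) (i # p) = subt_at (ts ! i) p"

fun replace_at :: "('f, 'v) trm \<Rightarrow> pos \<Rightarrow> ('f, 'v) trm \<Rightarrow> ('f, 'v) trm" where
  "replace_at t [] u = u"
| "replace_at (TVar x) (i # p) u = TVar x"
| "replace_at (TFun f b ts) (i # p) u = TFun f b (ts[i := replace_at (ts ! i) p u])"

fun flat_above :: "('f, 'v) trm \<Rightarrow> pos \<Rightarrow> ('f, 'v) trm" where
  "flat_above t [] = t"
| "flat_above (TVar x) (i # p) = TVar x"
| "flat_above (TFun f b ts) (i # p) = TFun f False (ts[i := flat_above (ts ! i) p])"

definition ann_at :: "('f, 'v) trm \<Rightarrow> pos \<Rightarrow> bool" where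
  "ann_at t p \<longleftrightarrow> p \<in> poss t \<and> (\<exists>f ts. subt_at t p = TFun f True ts)"

function sharp_pos_aux :: "pos set \<Rightarrow> pos \<Rightarrow> ('f, 'v) trm \<Rightarrow> ('f, 'v) trm" where
  "sharp_pos_aux \<Phi> p (TVar x) = TVar x"
| "sharp_pos_aux \<Phi> p (TFun f b ts) =
     TFun f (p \<in> \<Phi>) (map (\<lambda>(i, t). sharp_pos_aux \<Phi> (p @ [i]) t) (zip [0..<length ts] ts))"
  by pat_completeness auto
termination
  by (relation "measure (\<lambda>(\<Phi>, p, t). size t)")
     (auto dest!: set_zip_rightD intro!: size_list_estimation' simp: less_Suc_eq_le)

definition sharp_pos :: "pos set \<Rightarrow> ('f, 'v) trm \<Rightarrow> ('f, 'v) trm" where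
  "sharp_pos \<Phi> t = sharp_pos_aux \<Phi> [] t"

definition ann_subterm_at :: "('f, 'v) trm \<Rightarrow> pos \<Rightarrow> ('f, 'v) trm \<Rightarrow> bool" where
  "ann_subterm_at t p s \<longleftrightarrow> ann_at s p \<and> t = flat (subt_at s p)"

definition ann_subterm :: "('f, 'v) trm \<Rightarrow> ('f, 'v) trm \<Rightarrow> bool" where
  "ann_subterm t s \<longleftrightarrow> (\<exists>p. ann_subterm_at t p s)"

text \<open>An ADP  l -> {p1:r1, ..., pk:rk}^m  is represented as (l, [(p1,r1),...,(pk,rk)], m).\<close>
type_synonym ('f, 'v) adp = "('f, 'v) trm \<times> (real \<times> ('f, 'v) trm) list \<times> bool"

definition adp_lhs :: "('f, 'v) adp \<Rightarrow> ('f, 'v) trm" where "adp_lhs a = fst a"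
definition adp_rhs :: "('f, 'v) adp \<Rightarrow> (real \<times> ('f, 'v) trm) list" where "adp_rhs a = fst (snd a)"
definition adp_flag :: "('f, 'v) adp \<Rightarrow> bool" where "adp_flag a = snd (snd a)"

definition wf_adp :: "('f \<times> nat) set \<Rightarrow> ('f, 'v) adp \<Rightarrow> bool" where
  "wf_adp F a \<longleftrightarrow>
     is_TFun (adp_lhs a) \<and> unannotated (adp_lhs a) \<and> funas (adp_lhs a) \<subseteq> F \<and>
     adp_rhs a \<noteq> [] \<and>
     (\<forall>(p, r) \<in> set (adp_rhs a). 0 < p \<and> p \<le> 1 \<and> funas r \<subseteq> F \<and> vars r \<subseteq> vars (adp_lhs a)) \<and>
     sum_list (map fst (adp_rhs a)) = 1"

definition defined :: "('f, 'v) adp set \<Rightarrow> ('f \<times> nat) set" where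
  "defined P = {(f, length ts) | f b ts. \<exists>a \<in> P. adp_lhs a = TFun f b ts}"

type_synonym ('f, 'v) adp_problem = "('f, 'v) adp set \<times> ('f, 'v) adp set"

definition wf_problem :: "('f \<times> nat) set \<Rightarrow> ('f, 'v) adp_problem \<Rightarrow> bool" where
  "wf_problem F PS \<longleftrightarrow> (case PS of (P, S) \<Rightarrow>
     finite P \<and> S \<subseteq> P \<and> (\<forall>a \<in> P. wf_adp F a \<and>
       (\<forall>(p, r) \<in> set (adp_rhs a). ann_funas r \<subseteq> defined P)))"

text \<open>normal forms w.r.t. P: no subterm (of the unannotated term) is an instance of a
  left-hand side (equivalently, no innermost rewrite step with P is possible)\<close>
definition NF :: "('f, 'v) adp set \<Rightarrow> ('f, 'v) trm \<Rightarrow> bool" where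
  "NF P s \<longleftrightarrow> (\<forall>p \<in> poss s. \<forall>a \<in> P. \<forall>\<sigma>. flat (subt_at s p) \<noteq> subst \<sigma> (adp_lhs a))"

definition arg_NF :: "('f, 'v) adp set \<Rightarrow> ('f, 'v) trm \<Rightarrow> bool" where
  "arg_NF P s \<longleftrightarrow> (\<forall>p \<in> poss s. p \<noteq> [] \<longrightarrow> NF P (subt_at s p))"

text \<open>result of one step at position pi in s with substitution sigma and flag m,
  for right-hand side r: cases (at), (nt), (af), (nf)\<close>
definition step_result ::
  "('f, 'v) trm \<Rightarrow> pos \<Rightarrow> ('v \<Rightarrow> ('f, 'v) trm) \<Rightarrow> bool \<Rightarrow> ('f, 'v) trm \<Rightarrow> ('f, 'v) trm" where
  "step_result s \<pi> \<sigma> m r =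
     (let r' = (if ann_at s \<pi> then r else flat r);
          u = replace_at s \<pi> (subst \<sigma> r')
      in if m then u else flat_above u \<pi>)"

definition adp_step ::
  "('f, 'v) adp set \<Rightarrow> ('f, 'v) trm \<Rightarrow> ('f, 'v) adp \<Rightarrow> pos \<Rightarrow> (real \<times> ('f, 'v) trm) list \<Rightarrow> bool" where
  "adp_step P s a \<pi> \<mu> \<longleftrightarrow> a \<in> P \<and> \<pi> \<in> poss s \<and>
     (\<exists>\<sigma>. flat (subt_at s \<pi>) = subst \<sigma> (adp_lhs a) \<and> arg_NF P (subst \<sigma> (adp_lhs a)) \<and>
          \<mu> = map (\<lambda>(p, r). (p, step_result s \<pi> \<sigma> (adp_flag a) r)) (adp_rhs a))"

section \<open>Chain trees\<close>

text \<open>A chain tree: node set V (prefix closed, root []), probabilities, terms, and for each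
  inner node the ADP and position used for its rewrite step.\<close>
type_synonym ('f, 'v) ctree =
  "pos set \<times> (pos \<Rightarrow> real) \<times> (pos \<Rightarrow> ('f, 'v) trm) \<times> (pos \<Rightarrow> ('f, 'v) adp \<times> pos)"

definition ct_nodes :: "('f, 'v) ctree \<Rightarrow> pos set" where "ct_nodes T = fst T"
definition ct_prob :: "('f, 'v) ctree \<Rightarrow> pos \<Rightarrow> real" where "ct_prob T = fst (snd T)"
definition ct_term :: "('f, 'v) ctree \<Rightarrow> pos \<Rightarrow> ('f, 'v) trm" where "ct_term T = fst (snd (snd T))"
definition ct_step :: "('f, 'v) ctree \<Rightarrow> pos \<Rightarrow> ('f, 'v) adp \<times> pos" where "ct_step T = snd (snd (snd T))"

definition ct_inner :: "('f, 'v) ctree \<Rightarrow> pos \<Rightarrow> bool" where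
  "ct_inner T v \<longleftrightarrow> v \<in> ct_nodes T \<and> (\<exists>i. v @ [i] \<in> ct_nodes T)"

definition chain_tree :: "('f, 'v) adp set \<Rightarrow> ('f, 'v) ctree \<Rightarrow> bool" where
  "chain_tree P T \<longleftrightarrow>
     [] \<in> ct_nodes T \<and> (\<forall>v i. v @ [i] \<in> ct_nodes T \<longrightarrow> v \<in> ct_nodes T) \<and>
     ct_prob T [] = 1 \<and>
     (\<forall>v. ct_inner T v \<longrightarrow>
        (\<exists>\<mu>. adp_step P (ct_term T v) (fst (ct_step T v)) (snd (ct_step T v)) \<mu> \<and>
             (\<forall>i. v @ [i] \<in> ct_nodes T \<longleftrightarrow> i < length \<mu>) \<and>
             (\<forall>i < length \<mu>. ct_prob T (v @ [i]) = ct_prob T v * fst (\<mu> ! i) \<and>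
                              ct_term T (v @ [i]) = snd (\<mu> ! i))))"

text \<open>edl: sum of the probabilities of inner nodes rewritten by an (at)- or (af)-step
  (i.e. at an annotated position) with an ADP from S\<close>
definition edl :: "('f, 'v) adp set \<Rightarrow> ('f, 'v) ctree \<Rightarrow> ennreal" where
  "edl S T = infsum (\<lambda>v. ennreal (ct_prob T v))
     {v. ct_inner T v \<and> fst (ct_step T v) \<in> S \<and> ann_at (ct_term T v) (snd (ct_step T v))}"

definition edh :: "('f, 'v) adp set \<Rightarrow> ('f, 'v) adp set \<Rightarrow> ('f, 'v) trm \<Rightarrow> ennreal" where
  "edh P S t = (SUP T \<in> {T. chain_tree P T \<and> ct_term T [] = sharp t}. edl S T)"

definition basic :: "('f \<times> nat) set \<Rightarrow> ('f, 'v) adp set \<Rightarrow> ('f, 'v) trm \<Rightarrow> bool" where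
  "basic F P t \<longleftrightarrow> unannotated t \<and> funas t \<subseteq> F \<and>
     (\<exists>f ts. t = TFun f False ts \<and> (f, length ts) \<in> defined P \<and>
        (\<forall>u \<in> set ts. funas u \<inter> defined P = {}))"

datatype cplx = Pol nat | Exp | TwoExp | Fin | Omega

fun crank :: "cplx \<Rightarrow> nat" where
  "crank (Pol a) = 0" | "crank Exp = 1" | "crank TwoExp = 2" | "crank Fin = 3" | "crank Omega = 4"

fun cpol :: "cplx \<Rightarrow> nat" where
  "cpol (Pol a) = a" | "cpol _ = 0"

instantiation cplx :: linorder
begin
definition less_eq_cplx :: "cplx \<Rightarrow> cplx \<Rightarrow> bool" where
  "less_eq_cplx x y \<longleftrightarrow> crank x < crank y \<or> (crank x = crank y \<and> cpol x \<le> cpol y)"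
definition less_cplx :: "cplx \<Rightarrow> cplx \<Rightarrow> bool" where
  "less_cplx x y \<longleftrightarrow> x \<le> y \<and> \<not> y \<le> x"
instance
proof
  fix x y z :: cplx
  show "x < y \<longleftrightarrow> x \<le> y \<and> \<not> y \<le> x" by (simp add: less_cplx_def)
  show "x \<le> x" by (simp add: less_eq_cplx_def)
  show "x \<le> y \<Longrightarrow> y \<le> z \<Longrightarrow> x \<le> z" by (auto simp: less_eq_cplx_def)
  show "x \<le> y \<Longrightarrow> y \<le> x \<Longrightarrow> x = y"
    by (cases x; cases y) (auto simp: less_eq_cplx_def)
  show "x \<le> y \<or> y \<le> x" by (auto simp: less_eq_cplx_def)
qed
end

text \<open>the iota operator on functions nat => ennreal (the value top plays the role of omega)\<close>
definition in_Pol :: "(nat \<Rightarrow> ennreal) \<Rightarrow> nat \<Rightarrow> bool" where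
  "in_Pol f a \<longleftrightarrow> (\<exists>c::real. eventually (\<lambda>n. f n \<le> ennreal (c * real n ^ a)) at_top)"

definition in_Exp :: "(nat \<Rightarrow> ennreal) \<Rightarrow> bool" where
  "in_Exp f \<longleftrightarrow> (\<exists>(c::real) (a::nat). eventually (\<lambda>n. f n \<le> ennreal (c * 2 ^ (n ^ a))) at_top)"

definition in_TwoExp :: "(nat \<Rightarrow> ennreal) \<Rightarrow> bool" where
  "in_TwoExp f \<longleftrightarrow> (\<exists>(c::real) (a::nat). eventually (\<lambda>n. f n \<le> ennreal (c * 2 ^ (2 ^ (n ^ a)))) at_top)"

definition iota :: "(nat \<Rightarrow> ennreal) \<Rightarrow> cplx" where
  "iota f = (if \<exists>a. in_Pol f a then Pol (LEAST a. in_Pol f a)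
             else if in_Exp f then Exp
             else if in_TwoExp f then TwoExp
             else if (\<forall>n. f n \<noteq> top) then Fin
             else Omega)"

definition iota_prob :: "('f \<times> nat) set \<Rightarrow> ('f, 'v) adp_problem \<Rightarrow> cplx" where
  "iota_prob F PS = (case PS of (P, S) \<Rightarrow>
     iota (\<lambda>n. SUP t \<in> {t. basic F P t \<and> tsize t \<le> n}. edh P S t))"

text \<open>A proof tree: finite prefix-closed node set, labels L_A (ADP problems) and L_C
  (complexities). Inner nodes arise by some processor application (no further
  constraint); leaves carry Pol 0 if solved and Omega otherwise.\<close>
type_synonym ('f, 'v) ptree = "pos set \<times> (pos \<Rightarrow> ('f, 'v) adp_problem) \<times> (pos \<Rightarrow> cplx)"

definition pt_nodes :: "('f, 'v) ptree \<Rightarrow> pos set" where "pt_nodes T = fst T"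
definition pt_LA :: "('f, 'v) ptree \<Rightarrow> pos \<Rightarrow> ('f, 'v) adp_problem" where "pt_LA T = fst (snd T)"
definition pt_LC :: "('f, 'v) ptree \<Rightarrow> pos \<Rightarrow> cplx" where "pt_LC T = snd (snd T)"

definition pt_leaf :: "('f, 'v) ptree \<Rightarrow> pos \<Rightarrow> bool" where
  "pt_leaf T v \<longleftrightarrow> v \<in> pt_nodes T \<and> (\<forall>i. v @ [i] \<notin> pt_nodes T)"

definition proof_tree :: "('f \<times> nat) set \<Rightarrow> ('f, 'v) ptree \<Rightarrow> bool" where
  "proof_tree F T \<longleftrightarrow> finite (pt_nodes T) \<and> [] \<in> pt_nodes T \<and>
     (\<forall>v i. v @ [i] \<in> pt_nodes T \<longrightarrow> v \<in> pt_nodes T) \<and>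
     (\<forall>v \<in> pt_nodes T. wf_problem F (pt_LA T v)) \<and>
     (\<forall>v. pt_leaf T v \<longrightarrow> pt_LC T v = (if snd (pt_LA T v) = {} then Pol 0 else Omega))"

text \<open>L_C(v_1) + ... + L_C(v_{k-1}) for the root path v_1, ..., v_k = v (empty sum = Pol 0)\<close>
definition pt_anc :: "('f, 'v) ptree \<Rightarrow> pos \<Rightarrow> cplx" where
  "pt_anc T v = Max (insert (Pol 0) ((\<lambda>i. pt_LC T (take i v)) ` {..<length v}))"

definition pt_LC' :: "('f \<times> nat) set \<Rightarrow> ('f, 'v) ptree \<Rightarrow> pos \<Rightarrow> cplx" where
  "pt_LC' F T w = (if pt_leaf T w then iota_prob F (pt_LA T w) else pt_LC T w)"

definition well_formed :: "('f \<times> nat) set \<Rightarrow> ('f, 'v) ptree \<Rightarrow> bool" where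
  "well_formed F T \<longleftrightarrow> (\<forall>v \<in> pt_nodes T. case pt_LA T v of (P, S) \<Rightarrow>
      iota_prob F (P, S) \<le> max (pt_anc T v)
         (Max (pt_LC' F T ` {w \<in> pt_nodes T. \<exists>u. w = v @ u})) \<and>
      iota_prob F (P, P - S) \<le> pt_anc T v)"

definition sound_output ::
  "('f \<times> nat) set \<Rightarrow> ('f, 'v) adp_problem \<Rightarrow> cplx \<Rightarrow> ('f, 'v) adp_problem set \<Rightarrow> bool" where
  "sound_output F PS c Qs \<longleftrightarrow>
     (\<forall>T v. proof_tree F T \<and> well_formed F T \<and> v \<in> pt_nodes T \<and> pt_LA T v = PS \<longrightarrow>
        iota_prob F PS \<le> Max (insert (pt_anc T v) (insert c (iota_prob F ` Qs))) \<and>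
        (\<forall>(Pi, Si) \<in> Qs. iota_prob F (Pi, Pi - Si) \<le> max (pt_anc T v) c))"

section \<open>Narrowing substitutions and the processor ROI\<close>

definition is_mgu :: "('v \<Rightarrow> ('f, 'v) trm) \<Rightarrow> ('f, 'v) trm \<Rightarrow> ('f, 'v) trm \<Rightarrow> bool" where
  "is_mgu \<delta> s u \<longleftrightarrow> subst \<delta> s = subst \<delta> u \<and>
     (\<forall>\<theta>. subst \<theta> s = subst \<theta> u \<longrightarrow> (\<exists>\<mu>. \<theta> = (\<lambda>x. subst \<mu> (\<delta> x))))"

definition narrowing_subst ::
  "('f, 'v) adp set \<Rightarrow> ('f, 'v) trm \<Rightarrow> ('f, 'v) trm \<Rightarrow> ('v \<Rightarrow> ('f, 'v) trm) \<Rightarrow> bool" where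
  "narrowing_subst P l t \<delta> \<longleftrightarrow>
     (\<exists>\<tau> \<in> poss t. is_TFun (subt_at t \<tau>) \<and>
       (\<exists>a \<in> P. \<exists>g :: 'v \<Rightarrow> 'v. inj g \<and>
          (let l' = subst (\<lambda>x. TVar (g x)) (adp_lhs a) in
             vars l' \<inter> vars l = {} \<and> is_mgu \<delta> (subt_at t \<tau>) l' \<and>
             arg_NF P (subst \<delta> l) \<and> arg_NF P (subst \<delta> l'))))"

text \<open>t' is captured by delta_1, ..., delta_d: every narrowing substitution rho of t' is
  of the form delta_e rho' (compared on the variables of l, the only ones that matter)\<close>
definition captured ::
  "('f, 'v) adp set \<Rightarrow> ('f, 'v) trm \<Rightarrow> ('f, 'v) trm \<Rightarrow> ('v \<Rightarrow> ('f, 'v) trm) list \<Rightarrow> bool" where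
  "captured P l t' \<delta>s \<longleftrightarrow> (\<forall>\<rho>. narrowing_subst P l t' \<rho> \<longrightarrow>
     (\<exists>\<delta> \<in> set \<delta>s. \<exists>\<rho>'. \<forall>x \<in> vars l. \<rho> x = subst \<rho>' (\<delta> x)))"

definition capt ::
  "('f, 'v) adp set \<Rightarrow> ('f, 'v) trm \<Rightarrow> ('v \<Rightarrow> ('f, 'v) trm) list \<Rightarrow> ('f, 'v) trm \<Rightarrow> pos set" where
  "capt P l \<delta>s r = {\<pi>. \<exists>t'. ann_subterm_at t' \<pi> r \<and> \<not> captured P l t' \<delta>s}"

definition roi_N ::
  "('f, 'v) adp set \<Rightarrow> ('f, 'v) trm \<Rightarrow> (real \<times> ('f, 'v) trm) list \<Rightarrow> bool \<Rightarrow>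
   ('v \<Rightarrow> ('f, 'v) trm) list \<Rightarrow> ('f, 'v) adp set" where
  "roi_N P l rs m \<delta>s =
     (\<lambda>\<delta>. (subst \<delta> l, map (\<lambda>(p, r). (p, subst \<delta> r)) rs, m)) ` set \<delta>s \<union>
     {(l, map (\<lambda>(p, r). (p, sharp_pos (capt P l \<delta>s r) r)) rs, m)}"

definition roi_S ::
  "('f, 'v) adp set \<Rightarrow> ('f, 'v) adp \<Rightarrow> ('f, 'v) adp set \<Rightarrow> ('f, 'v) adp set" where
  "roi_S S \<alpha> N = (if \<alpha> \<in> S then (S - {\<alpha>}) \<union> N else S)"

end

theory Submission
  imports Defs
begin


lemma finite_vars: "finite (vars t)"
  by (induction t) auto

lemma subst_subst: "subst \<rho> (subst \<delta> t) = subst (\<lambda>x. subst \<rho> (\<delta> x)) t"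
  by (induction t) auto

lemma subst_cong: "(\<And>x. x \<in> vars t \<Longrightarrow> \<sigma> x = \<tau> x) \<Longrightarrow> subst \<sigma> t = subst \<tau> t"
  by (induction t) auto

lemma subst_TVar[simp]: "subst TVar t = t"
  by (induction t) (auto simp: map_idI)

lemma vars_subst: "vars (subst \<sigma> t) = (\<Union>x \<in> vars t. vars (\<sigma> x))"
  by (induction t) auto

lemma flat_flat[simp]: "flat (flat t) = flat t"
  by (induction t) auto

lemma flat_subst: "flat (subst \<sigma> t) = subst (\<lambda>x. flat (\<sigma> x)) (flat t)"
  by (induction t) auto

lemma vars_flat[simp]: "vars (flat t) = vars t"
  by (induction t) auto

lemma unann_subst_var: "flat (subst \<sigma> t) = subst \<sigma> t \<Longrightarrow> x \<in> vars t \<Longrightarrow> flat (\<sigma> x) = \<sigma> x"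
proof (induction t)
  case (TVar y) then show ?case by simp
next
  case (TFun f b ts)
  then obtain u where u: "u \<in> set ts" "x \<in> vars u" by auto
  from TFun.prems(1) have "map flat (map (subst \<sigma>) ts) = map (subst \<sigma>) ts" by simp
  then have "flat (subst \<sigma> u) = subst \<sigma> u" using u(1) by (simp add: map_eq_conv)
  then show ?case using TFun.IH u by blast
qed

lemma unann_subst_inv: "flat (subst \<rho> t) = subst \<rho> t \<Longrightarrow> flat t = t"
proof (induction t)
  case (TVar y) then show ?case by simp
next
  case (TFun f b ts)
  from TFun.prems have b: "\<not> b" and m: "map flat (map (subst \<rho>) ts) = map (subst \<rho>) ts" by auto
  have "\<forall>u\<in>set ts. flat u = u" using m TFun.IH by (auto simp: map_eq_conv)
  then show ?case using b by (simp add: map_idI)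
qed

section \<open>Unification\<close>

definition unifiesL :: "('v \<Rightarrow> ('f, 'v) trm) \<Rightarrow> (('f, 'v) trm \<times> ('f, 'v) trm) list \<Rightarrow> bool" where
  "unifiesL \<sigma> E \<longleftrightarrow> (\<forall>(s, u) \<in> set E. subst \<sigma> s = subst \<sigma> u)"

definition is_mguL :: "('v \<Rightarrow> ('f, 'v) trm) \<Rightarrow> (('f, 'v) trm \<times> ('f, 'v) trm) list \<Rightarrow> bool" where
  "is_mguL \<sigma> E \<longleftrightarrow> unifiesL \<sigma> E \<and> (\<forall>\<theta>. unifiesL \<theta> E \<longrightarrow> (\<exists>\<mu>. \<theta> = (\<lambda>x. subst \<mu> (\<sigma> x))))"

definition evars :: "(('f, 'v) trm \<times> ('f, 'v) trm) list \<Rightarrow> 'v set" where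
  "evars E = (\<Union>(s, u) \<in> set E. vars s \<union> vars u)"

definition esize :: "(('f, 'v) trm \<times> ('f, 'v) trm) list \<Rightarrow> nat" where
  "esize E = sum_list (map (\<lambda>(s, u). tsize s + tsize u) E)"

lemma finite_evars: "finite (evars E)"
  by (auto simp: evars_def finite_vars)

lemma tsize_pos: "tsize t > 0"
  by (cases t) auto

lemma tsize_var_le: "x \<in> vars u \<Longrightarrow> tsize (\<theta> x) \<le> tsize (subst \<theta> u)"
proof (induction u)
  case (TVar y) then show ?case by simp
next
  case (TFun f b ts)
  then obtain v where v: "v \<in> set ts" "x \<in> vars v" by auto
  have "tsize (\<theta> x) \<le> tsize (subst \<theta> v)" using TFun v by blast
  also have "\<dots> \<le> sum_list (map tsize (map (subst \<theta>) ts))"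
    using v(1) by (simp add: member_le_sum_list)
  finally show ?case by simp
qed

lemma occurs: assumes "x \<in> vars u" "u \<noteq> TVar x" shows "tsize (\<theta> x) < tsize (subst \<theta> u)"
proof (cases u)
  case (TVar y) then show ?thesis using assms by auto
next
  case (TFun f b ts)
  then obtain v where v: "v \<in> set ts" "x \<in> vars v" using assms by auto
  have "tsize (\<theta> x) \<le> tsize (subst \<theta> v)" by (rule tsize_var_le[OF v(2)])
  also have "\<dots> \<le> sum_list (map tsize (map (subst \<theta>) ts))"
    using v(1) by (simp add: member_le_sum_list)
  finally show ?thesis using TFun by simp
qed

lemma var_case:
  fixes w :: "('f, 'v) trm"
  assumes IH: "\<And>E' :: (('f, 'v) trm \<times> ('f, 'v) trm) list. card (evars E') < card (evars ((TVar x, w) # E)) \<Longrightarrow> (\<exists>\<theta>. unifiesL \<theta> E') \<Longrightarrow> \<exists>\<sigma>. is_mguL \<sigma> E'"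
    and ne: "w \<noteq> TVar x" and un: "unifiesL \<theta> ((TVar x, w) # E)"
  shows "\<exists>\<sigma>. is_mguL \<sigma> ((TVar x, w) # E)"
proof -
  have eq: "\<theta> x = subst \<theta> w" using un by (simp add: unifiesL_def)
  have nx: "x \<notin> vars w" using occurs[of x w \<theta>] ne eq by auto
  define \<rho> where "\<rho> = TVar(x := w)"
  define E' where "E' = map (\<lambda>(a, b). (subst \<rho> a, subst \<rho> b)) E"
  have thr: "subst \<theta> (subst \<rho> a) = subst \<theta> a" for a
    by (simp add: subst_subst, rule subst_cong) (auto simp: \<rho>_def eq)
  have unE': "unifiesL \<theta> E'" if "unifiesL \<theta> ((TVar x, w) # E)" for \<theta>
  proof -
    have "\<theta> x = subst \<theta> w" using that by (simp add: unifiesL_def)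
    then have "subst \<theta> (subst \<rho> a) = subst \<theta> a" for a
      by (simp add: subst_subst, intro subst_cong) (auto simp: \<rho>_def)
    then show ?thesis using that by (auto simp: unifiesL_def E'_def)
  qed
  have vsub: "vars (subst \<rho> a) \<subseteq> (vars a - {x}) \<union> vars w" for a
    using nx by (auto simp: vars_subst \<rho>_def split: if_splits)
  have "evars E' \<subseteq> evars ((TVar x, w) # E) - {x}"
    using vsub nx by (fastforce simp: evars_def E'_def)
  moreover have "x \<in> evars ((TVar x, w) # E)" by (simp add: evars_def)
  ultimately have "evars E' \<subset> evars ((TVar x, w) # E)" by blast
  then have "card (evars E') < card (evars ((TVar x, w) # E))"
    by (rule psubset_card_mono[OF finite_evars])
  then have "\<exists>\<sigma>'. is_mguL \<sigma>' E'" using IH[of E'] unE'[OF un] by blast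
  then obtain \<sigma>' where m: "is_mguL \<sigma>' E'" by blast
  define \<sigma> where "\<sigma> = (\<lambda>y. subst \<sigma>' (\<rho> y))"
  have s1: "subst \<sigma> a = subst \<sigma>' (subst \<rho> a)" for a by (simp add: subst_subst \<sigma>_def)
  have "subst \<sigma>' (subst \<rho> w) = subst \<sigma>' w"
    by (rule arg_cong[where f="subst \<sigma>'"], simp add: \<rho>_def, rule subst_cong[where \<tau>=TVar, simplified]) (use nx in auto)
  moreover have "\<sigma> x = subst \<sigma>' w" unfolding \<sigma>_def \<rho>_def by simp
  ultimately have "\<sigma> x = subst \<sigma> w" using s1[of w] by simp
  moreover have "unifiesL \<sigma> E" using m
    by (auto simp: is_mguL_def unifiesL_def E'_def s1)
  ultimately have u1: "unifiesL \<sigma> ((TVar x, w) # E)" by (simp add: unifiesL_def)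
  have "\<exists>\<mu>. \<theta>' = (\<lambda>y. subst \<mu> (\<sigma> y))" if "unifiesL \<theta>' ((TVar x, w) # E)" for \<theta>'
  proof -
    from m unE'[OF that] obtain \<mu> where mu: "\<theta>' = (\<lambda>y. subst \<mu> (\<sigma>' y))"
      by (auto simp: is_mguL_def)
    have ex: "\<theta>' x = subst \<theta>' w" using that by (simp add: unifiesL_def)
    have "\<theta>' y = subst \<mu> (\<sigma> y)" for y
    proof (cases "y = x")
      case True
      have "subst \<mu> (\<sigma> y) = subst \<mu> (subst \<sigma>' w)"
        using True \<open>\<sigma> x = subst \<sigma> w\<close> \<open>subst \<sigma>' (subst \<rho> w) = subst \<sigma>' w\<close> s1 by simp
      also have "\<dots> = subst \<theta>' w" by (simp add: subst_subst mu)
      finally show ?thesis using True ex by simp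
    next
      case False then show ?thesis by (simp add: \<sigma>_def \<rho>_def mu)
    qed
    then show ?thesis by blast
  qed
  with u1 show ?thesis by (auto simp: is_mguL_def)
qed

lemma mgu_exists_aux:
  fixes E :: "(('f, 'v) trm \<times> ('f, 'v) trm) list"
  shows "(\<exists>\<theta>. unifiesL \<theta> E) \<Longrightarrow> \<exists>\<sigma>. is_mguL \<sigma> E"
proof (induction E rule: wf_induct[OF wf_measures[of "[\<lambda>E. card (evars E), esize]"]])
  case (1 E)
  have IH: "\<And>E'. (E', E) \<in> measures [\<lambda>E. card (evars E), esize] \<Longrightarrow> \<exists>\<theta>. unifiesL \<theta> E' \<Longrightarrow> \<exists>\<sigma>. is_mguL \<sigma> E'"
    using 1(1) by blast
  from 1(2) obtain \<theta> where th: "unifiesL \<theta> E" by blast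
  show ?case
  proof (cases E)
    case Nil
    have "is_mguL TVar E" unfolding is_mguL_def unifiesL_def Nil by auto
    then show ?thesis by blast
  next
    case (Cons e E0)
    obtain s u where e: "e = (s, u)" by (cases e)
    show ?thesis
    proof (cases "\<exists>x. s = TVar x")
      case True
      then obtain x where sx: "s = TVar x" by blast
      show ?thesis
      proof (cases "u = TVar x")
        case True
        have "card (evars E0) \<le> card (evars E)"
          by (rule card_mono[OF finite_evars]) (auto simp: evars_def Cons)
        moreover have "esize E0 < esize E" using tsize_pos[of s] by (simp add: esize_def Cons e)
        ultimately have "(E0, E) \<in> measures [\<lambda>E. card (evars E), esize]" by auto
        moreover have "unifiesL \<theta> E0" using th by (simp add: unifiesL_def Cons)
        ultimately obtain \<sigma> where "is_mguL \<sigma> E0" using IH by blast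
        then have "is_mguL \<sigma> E" using True sx
          by (simp add: is_mguL_def unifiesL_def Cons e)
        then show ?thesis by blast
      next
        case False
        show ?thesis unfolding Cons e sx
        proof (rule var_case[OF _ False th[unfolded Cons e sx]])
          fix E' :: "(('f, 'v) trm \<times> ('f, 'v) trm) list" assume "card (evars E') < card (evars ((TVar x, u) # E0))" "\<exists>\<theta>. unifiesL \<theta> E'"
          moreover have "(E', E) \<in> measures [\<lambda>E. card (evars E), esize]" using calculation(1) by (simp add: Cons e sx)
          ultimately show "\<exists>\<sigma>. is_mguL \<sigma> E'" using IH by blast
        qed
      qed
    next
      case sNV: False
      show ?thesis
      proof (cases "\<exists>x. u = TVar x")
        case True
        then obtain x where ux: "u = TVar x" by blast
        have sw: "unifiesL \<sigma> ((s, u) # E0) \<longleftrightarrow> unifiesL \<sigma> ((TVar x, s) # E0)" for \<sigma>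
          by (auto simp: unifiesL_def ux)
        have ev: "evars ((s, u) # E0) = evars ((TVar x, s) # E0)" by (auto simp: evars_def ux)
        have "\<exists>\<sigma>. is_mguL \<sigma> ((TVar x, s) # E0)"
        proof (rule var_case[OF _ _ th[unfolded Cons e, unfolded sw]])
          fix E' :: "(('f, 'v) trm \<times> ('f, 'v) trm) list" assume "card (evars E') < card (evars ((TVar x, s) # E0))" "\<exists>\<theta>. unifiesL \<theta> E'"
          moreover have "(E', E) \<in> measures [\<lambda>E. card (evars E), esize]" using calculation(1) ev by (simp add: Cons e)
          ultimately show "\<exists>\<sigma>. is_mguL \<sigma> E'" using IH by blast
        next
          show "s \<noteq> TVar x" using sNV by blast
        qed
        then show ?thesis unfolding Cons e is_mguL_def using sw by simp
      next
        case False
        then obtain g c us where u: "u = TFun g c us" by (cases u) auto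
        from sNV obtain f b ss where s: "s = TFun f b ss" by (cases s) auto
        have equ: "subst \<theta> s = subst \<theta> u" using th by (simp add: unifiesL_def Cons e)
        then have fg: "f = g" "b = c" and ml: "map (subst \<theta>) ss = map (subst \<theta>) us" by (auto simp: s u)
        then have len: "length ss = length us" using map_eq_imp_length_eq by blast
        define E' where "E' = zip ss us @ E0"
        have ueq: "unifiesL \<sigma> E' \<longleftrightarrow> unifiesL \<sigma> E" for \<sigma>
        proof -
          have "(\<forall>(a, b)\<in>set (zip ss us). subst \<sigma> a = subst \<sigma> b) \<longleftrightarrow> map (subst \<sigma>) ss = map (subst \<sigma>) us"
            using len by (induction ss us rule: list_induct2) auto
          then show ?thesis by (auto simp: unifiesL_def E'_def Cons e s u fg)
        qed
        have "evars E' = evars E"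
        proof -
          have "evars (zip ss us @ E0) = (\<Union> (vars ` set ss)) \<union> (\<Union> (vars ` set us)) \<union> evars E0"
            using len by (induction ss us rule: list_induct2) (auto simp: evars_def)
          then show ?thesis by (auto simp: evars_def E'_def Cons e s u)
        qed
        moreover have "esize E' < esize E"
        proof -
          have "esize (zip ss us) = sum_list (map tsize ss) + sum_list (map tsize us)"
            using len
          proof (induction ss arbitrary: us)
            case Nil then show ?case by (simp add: esize_def)
          next
            case (Cons a ss) then show ?case by (cases us) (auto simp: esize_def)
          qed
          then show ?thesis by (simp add: E'_def esize_def Cons e s u)
        qed
        ultimately have "(E', E) \<in> measures [\<lambda>E. card (evars E), esize]" by auto
        then obtain \<sigma> where "is_mguL \<sigma> E'" using IH ueq th by blast
        then show ?thesis using ueq by (auto simp: is_mguL_def)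
      qed
    qed
  qed
qed

lemma mgu_exists:
  assumes "subst \<theta> s = subst \<theta> u" shows "\<exists>\<delta>. is_mgu \<delta> s u"
proof -
  obtain \<sigma> where "is_mguL \<sigma> [(s, u)]" using mgu_exists_aux[of "[(s,u)]"] assms by (auto simp: unifiesL_def)
  then show ?thesis by (auto simp: is_mguL_def is_mgu_def unifiesL_def)
qed



lemma subt_TVar[simp]: "subt_at (TVar x) p = TVar x"
  by (cases p) auto

lemma valid_append: "valid_pos t (p @ q) \<longleftrightarrow> valid_pos t p \<and> valid_pos (subt_at t p) q"
proof (induction p arbitrary: t)
  case Nil then show ?case by simp
next
  case (Cons i p) then show ?case by (cases t) auto
qed

lemma subt_append: "subt_at t (p @ q) = subt_at (subt_at t p) q"
proof (induction p arbitrary: t)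
  case Nil then show ?case by simp
next
  case (Cons i p) then show ?case by (cases t) auto
qed

lemma valid_flat[simp]: "valid_pos (flat t) p = valid_pos t p"
proof (induction t arbitrary: p)
  case (TVar x) then show ?case by (cases p) auto
next
  case (TFun f b ts) then show ?case by (cases p) auto
qed

lemma subt_flat: "valid_pos t p \<Longrightarrow> subt_at (flat t) p = flat (subt_at t p)"
proof (induction p arbitrary: t)
  case Nil then show ?case by simp
next
  case (Cons i p) then show ?case by (cases t) auto
qed

lemma valid_subst: "valid_pos t p \<Longrightarrow> valid_pos (subst \<sigma> t) p \<and> subt_at (subst \<sigma> t) p = subst \<sigma> (subt_at t p)"
proof (induction p arbitrary: t)
  case Nil then show ?case by simp
next
  case (Cons i p) then show ?case by (cases t) auto
qed

lemma valid_subst_inv: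
  "valid_pos (subst \<sigma> t) p \<Longrightarrow> (valid_pos t p \<and> is_TFun (subt_at t p)) \<or>
     (\<exists>p1 p2 x. p = p1 @ p2 \<and> valid_pos t p1 \<and> subt_at t p1 = TVar x \<and> valid_pos (\<sigma> x) p2 \<and>
        subt_at (subst \<sigma> t) p = subt_at (\<sigma> x) p2)"
proof (induction p arbitrary: t)
  case Nil then show ?case by (cases t) (auto simp: is_TFun_def)
next
  case (Cons i p)
  show ?case
  proof (cases t)
    case (TVar x) then show ?thesis using Cons.prems by (intro disjI2 exI[of _ "[]"] exI[of _ "i # p"] exI[of _ x]) auto
  next
    case (TFun f b ts)
    with Cons.prems have i: "i < length ts" and v: "valid_pos (subst \<sigma> (ts ! i)) p" by auto
    from Cons.IH[OF v] show ?thesis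
    proof
      assume "valid_pos (ts ! i) p \<and> is_TFun (subt_at (ts ! i) p)"
      then show ?thesis using i TFun by auto
    next
      assume "\<exists>p1 p2 x. p = p1 @ p2 \<and> valid_pos (ts ! i) p1 \<and> subt_at (ts ! i) p1 = TVar x \<and>
        valid_pos (\<sigma> x) p2 \<and> subt_at (subst \<sigma> (ts ! i)) p = subt_at (\<sigma> x) p2"
      then obtain p1 p2 x where "p = p1 @ p2" "valid_pos (ts ! i) p1" "subt_at (ts ! i) p1 = TVar x"
        "valid_pos (\<sigma> x) p2" "subt_at (subst \<sigma> (ts ! i)) p = subt_at (\<sigma> x) p2" by blast
      then show ?thesis using i TFun by (intro disjI2 exI[of _ "i # p1"] exI[of _ p2] exI[of _ x]) auto
    qed
  qed
qed

lemma var_pos: "x \<in> vars t \<Longrightarrow> \<exists>p. valid_pos t p \<and> subt_at t p = TVar x \<and> (is_TFun t \<longrightarrow> p \<noteq> [])"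
proof (induction t)
  case (TVar y) then show ?case by (auto simp: is_TFun_def intro!: exI[of _ "[]"])
next
  case (TFun f b ts)
  then obtain i where i: "i < length ts" "x \<in> vars (ts ! i)" by (auto simp: in_set_conv_nth)
  then obtain p where "valid_pos (ts ! i) p" "subt_at (ts ! i) p = TVar x"
    using TFun.IH nth_mem by blast
  then show ?case using i by (intro exI[of _ "i # p"]) auto
qed

lemma NF_flat: "NF P (flat s) = NF P s"
  by (auto simp: NF_def poss_def subt_flat)

lemma arg_NF_flat: "arg_NF P (flat s) = arg_NF P s"
  by (auto simp: arg_NF_def poss_def subt_flat NF_flat)

lemma NF_subt: "NF P u \<Longrightarrow> valid_pos u q \<Longrightarrow> NF P (subt_at u q)"
  unfolding NF_def poss_def by (metis mem_Collect_eq subt_append valid_append)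

lemma NF_root: "NF P u \<Longrightarrow> a \<in> P \<Longrightarrow> flat u \<noteq> subst \<sigma> (adp_lhs a)"
  unfolding NF_def poss_def by (metis (mono_tags) mem_Collect_eq subt_at.simps(1) valid_pos.simps(1))

lemma NF_subst_inv: "NF P (subst \<mu> w) \<Longrightarrow> NF P w"
  unfolding NF_def poss_def
proof (intro ballI allI, safe)
  fix q a \<sigma>
  assume H: "\<forall>p\<in>{p. valid_pos (subst \<mu> w) p}. \<forall>a\<in>P. \<forall>\<sigma>. flat (subt_at (subst \<mu> w) p) \<noteq> subst \<sigma> (adp_lhs a)"
    and q: "valid_pos w q" and a: "a \<in> P" and eq: "flat (subt_at w q) = subst \<sigma> (adp_lhs a)"
  have "flat (subt_at (subst \<mu> w) q) = flat (subst \<mu> (subt_at w q))" using valid_subst[OF q] by simp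
  also have "\<dots> = subst (\<lambda>x. flat (\<mu> x)) (subst \<sigma> (adp_lhs a))" by (simp add: flat_subst eq)
  also have "\<dots> = subst (\<lambda>y. subst (\<lambda>x. flat (\<mu> x)) (\<sigma> y)) (adp_lhs a)" by (simp add: subst_subst)
  finally show False using H q a valid_subst[OF q] by blast
qed

lemma arg_NF_subst_inv: "arg_NF P (subst \<mu> u) \<Longrightarrow> arg_NF P u"
  unfolding arg_NF_def poss_def by (metis NF_subst_inv mem_Collect_eq valid_subst)

lemma fresh_inj:
  assumes inf: "infinite (UNIV :: 'v set)" and fin: "finite (A :: 'v set)"
  shows "\<exists>g :: 'v \<Rightarrow> 'v. inj g \<and> range g \<inter> A = {}"
proof -
  have "\<exists>g :: 'v \<Rightarrow> 'v. inj g \<and> range g = UNIV - A"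
    using fin
  proof (induction A rule: finite_induct)
    case empty
    show ?case by (rule exI[of _ id]) simp
  next
    case (insert a A)
    from insert.IH obtain g :: "'v \<Rightarrow> 'v" where g: "inj g" "range g = UNIV - A" by blast
    have infA: "infinite (UNIV - A)" by (rule Diff_infinite_finite[OF insert(1) inf])
    from infinite_imp_bij_betw[OF infA, of a] obtain h where h: "bij_betw h (UNIV - A) (UNIV - A - {a})" by blast
    have "inj_on h (range g)" using h unfolding g(2) bij_betw_def by (elim conjE)
    then have "inj (h \<circ> g)" using g(1) by (rule comp_inj_on[rotated])
    moreover have "range (h \<circ> g) = h ` range g" by (rule image_comp[symmetric])
    moreover have "h ` range g = UNIV - A - {a}" using h unfolding g(2) bij_betw_def by (elim conjE)
    ultimately have "inj (h \<circ> g) \<and> range (h \<circ> g) = UNIV - insert a A" by auto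
    then show ?case by blast
  qed
  then obtain g :: "'v \<Rightarrow> 'v" where "inj g" "range g = UNIV - A" by blast
  then have "inj g \<and> range g \<inter> A = {}" by auto
  then show ?thesis by blast
qed

lemma innermost:
  "\<not> NF P w \<Longrightarrow> \<exists>q a \<sigma>. valid_pos w q \<and> a \<in> P \<and> flat (subt_at w q) = subst \<sigma> (adp_lhs a) \<and>
       arg_NF P (subst \<sigma> (adp_lhs a))"
proof (induction w)
  case (TVar x)
  have "\<exists>a\<in>P. \<exists>\<sigma>. TVar x = subst \<sigma> (adp_lhs a)" using TVar unfolding NF_def poss_def by auto
  then obtain a \<sigma> where a: "a \<in> P" "TVar x = subst \<sigma> (adp_lhs a)" by blast
  have "arg_NF P (TVar x)" unfolding arg_NF_def poss_def
    by (auto elim: valid_pos.elims)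
  then show ?case using a(1) by (intro exI[of _ "[]"] exI[of _ a] exI[of _ \<sigma>]) (simp add: a(2)[symmetric])
next
  case (TFun f b ts)
  show ?case
  proof (cases "\<exists>i < length ts. \<not> NF P (ts ! i)")
    case True
    then obtain i where i: "i < length ts" "\<not> NF P (ts ! i)" by blast
    from TFun.IH[OF nth_mem[OF i(1)] i(2)] obtain q a \<sigma> where
      "valid_pos (ts ! i) q \<and> a \<in> P \<and> flat (subt_at (ts ! i) q) = subst \<sigma> (adp_lhs a) \<and> arg_NF P (subst \<sigma> (adp_lhs a))"
      by blast
    then show ?thesis using i by (intro exI[of _ "i # q"] exI[of _ a] exI[of _ \<sigma>]) auto
  next
    case False
    then have allNF: "\<forall>i < length ts. NF P (ts ! i)" by blast
    from TFun.prems obtain p a \<sigma> where p: "valid_pos (TFun f b ts) p" "a \<in> P"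
      "flat (subt_at (TFun f b ts) p) = subst \<sigma> (adp_lhs a)" by (auto simp: NF_def poss_def)
    have "p = []"
    proof (rule ccontr)
      assume "p \<noteq> []"
      then obtain i p' where "p = i # p'" by (cases p) auto
      then have "i < length ts" "valid_pos (ts ! i) p'" "flat (subt_at (ts ! i) p') = subst \<sigma> (adp_lhs a)"
        using p by auto
      then show False using allNF p(2) by (auto simp: NF_def poss_def)
    qed
    have "arg_NF P (flat (TFun f b ts))"
      unfolding arg_NF_def poss_def
    proof (intro ballI impI)
      fix q assume "q \<in> {q. valid_pos (flat (TFun f b ts)) q}" "q \<noteq> []"
      then obtain i q' where "q = i # q'" "i < length ts" "valid_pos (ts ! i) q'" by (cases q) auto
      then show "NF P (subt_at (flat (TFun f b ts)) q)"
        using allNF NF_subt[of P "ts ! i" q'] by (simp add: subt_flat NF_flat)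
    qed
    then show ?thesis using p \<open>p = []\<close> by (intro exI[of _ "[]"] exI[of _ a] exI[of _ \<sigma>]) auto
  qed
qed



lemma var_subt_vars: "valid_pos t p \<Longrightarrow> subt_at t p = TVar x \<Longrightarrow> x \<in> vars t"
proof (induction p arbitrary: t)
  case Nil then show ?case by simp
next
  case (Cons i p) then show ?case by (cases t) (auto, metis nth_mem)
qed

lemma vars_subt: "valid_pos t p \<Longrightarrow> vars (subt_at t p) \<subseteq> vars t"
proof (induction p arbitrary: t)
  case Nil then show ?case by simp
next
  case (Cons i p) then show ?case by (cases t) fastforce+
qed

lemma key:
  assumes inf: "infinite (UNIV :: 'v set)"
    and capt: "captured P l t' \<delta>s"
    and nonin: "\<not> (\<exists>\<delta>\<in>set \<delta>s. \<exists>\<rho>. \<forall>x\<in>vars l. \<sigma> x = subst \<rho> (\<delta> x))"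
    and argnf: "arg_NF P (subst \<sigma> l)"
    and unann: "flat (subst \<sigma> l) = subst \<sigma> l"
    and vt: "vars t' \<subseteq> vars l"
    and fl: "flat t' = t'"
    and lT: "is_TFun l"
  shows "NF P (subst \<sigma> (t' :: ('f, 'v) trm))"
proof (rule ccontr)
  assume "\<not> NF P (subst \<sigma> t')"
  from innermost[OF this] obtain q a \<sigma>2 where q: "valid_pos (subst \<sigma> t') q" and a: "a \<in> P"
    and eq: "flat (subt_at (subst \<sigma> t') q) = subst \<sigma>2 (adp_lhs a)"
    and anf2: "arg_NF P (subst \<sigma>2 (adp_lhs a))" by blast
  have sfl: "flat (\<sigma> x) = \<sigma> x" if "x \<in> vars l" for x
    using unann_subst_var[OF unann that] .
  from valid_subst_inv[OF q] show False
  proof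
    assume "\<exists>p1 p2 x. q = p1 @ p2 \<and> valid_pos t' p1 \<and> subt_at t' p1 = TVar x \<and> valid_pos (\<sigma> x) p2 \<and>
        subt_at (subst \<sigma> t') q = subt_at (\<sigma> x) p2"
    then obtain p1 p2 x where p: "valid_pos t' p1" "subt_at t' p1 = TVar x" "valid_pos (\<sigma> x) p2"
      "subt_at (subst \<sigma> t') q = subt_at (\<sigma> x) p2" by blast
    have xl: "x \<in> vars l" using var_subt_vars[OF p(1,2)] vt by blast
    from var_pos[OF xl] lT obtain p' where p': "valid_pos l p'" "subt_at l p' = TVar x" "p' \<noteq> []" by blast
    have "NF P (\<sigma> x)" using argnf valid_subst[OF p'(1), of \<sigma>] p' unfolding arg_NF_def poss_def by auto
    then have "NF P (subt_at (\<sigma> x) p2)" using NF_subt p(3) by blast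
    then show False using NF_root[OF _ a] eq p(4) by metis
  next
    assume A: "valid_pos t' q \<and> is_TFun (subt_at t' q)"
    define u0 where "u0 = subt_at t' q"
    have u0s: "subt_at (subst \<sigma> t') q = subst \<sigma> u0" using valid_subst A by (auto simp: u0_def)
    have u0f: "flat u0 = u0" using subt_flat[of t' q] A fl by (simp add: u0_def)
    have vu0: "vars u0 \<subseteq> vars l" using vars_subt A vt by (auto simp: u0_def)
    obtain g :: "'v \<Rightarrow> 'v" where g: "inj g" "range g \<inter> vars l = {}"
      using fresh_inj[OF inf finite_vars[of l]] by blast
    define l' where "l' = subst (\<lambda>x. TVar (g x)) (adp_lhs a)"
    define \<theta> where "\<theta> = (\<lambda>y. if y \<in> range g then \<sigma>2 (inv g y) else flat (\<sigma> y))"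
    have thl: "\<theta> x = \<sigma> x" if "x \<in> vars l" for x
      using that g(2) sfl[OF that] by (auto simp: \<theta>_def)
    have th_l: "subst \<theta> l = subst \<sigma> l" by (rule subst_cong) (simp add: thl)
    have th_u0: "subst \<theta> u0 = subst \<sigma> u0" by (rule subst_cong) (use thl vu0 in auto)
    have th_l': "subst \<theta> l' = subst \<sigma>2 (adp_lhs a)"
      unfolding l'_def subst_subst by (rule subst_cong) (simp add: \<theta>_def inv_f_f[OF g(1)])
    have "flat (subst \<sigma> u0) = subst \<sigma>2 (adp_lhs a)" using eq u0s by simp
    moreover have "flat (subst \<sigma> u0) = subst \<sigma> u0"
      using unann_subst_var[OF unann] vu0 by (subst flat_subst) (auto simp: u0f intro!: subst_cong)
    ultimately have unif: "subst \<theta> u0 = subst \<theta> l'" using th_u0 th_l' by simp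
    obtain \<delta>' where mgu: "is_mgu \<delta>' u0 l'" using mgu_exists[OF unif] by blast
    then obtain \<mu> where mu: "\<theta> = (\<lambda>x. subst \<mu> (\<delta>' x))" using unif unfolding is_mgu_def by blast
    have "arg_NF P (subst \<mu> (subst \<delta>' l))" using argnf th_l by (simp add: subst_subst mu[symmetric])
    then have an1: "arg_NF P (subst \<delta>' l)" by (rule arg_NF_subst_inv)
    have "arg_NF P (subst \<mu> (subst \<delta>' l'))" using anf2 th_l' by (simp add: subst_subst mu[symmetric])
    then have an2: "arg_NF P (subst \<delta>' l')" by (rule arg_NF_subst_inv)
    have disj: "vars l' \<inter> vars l = {}" using g(2) by (auto simp: l'_def vars_subst)
    have "narrowing_subst P l t' \<delta>'"
      unfolding narrowing_subst_def Let_def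
      using A a g(1) disj mgu an1 an2 by (auto simp: poss_def u0_def l'_def)
    with capt obtain \<delta> \<rho>' where d: "\<delta> \<in> set \<delta>s" "\<forall>x\<in>vars l. \<delta>' x = subst \<rho>' (\<delta> x)"
      unfolding captured_def by blast
    have "\<forall>x\<in>vars l. \<sigma> x = subst (\<lambda>y. subst \<mu> (\<rho>' y)) (\<delta> x)"
    proof
      fix x assume x: "x \<in> vars l"
      have "\<sigma> x = \<theta> x" using thl[OF x] by simp
      also have "\<dots> = subst \<mu> (\<delta>' x)" by (simp add: mu)
      also have "\<dots> = subst (\<lambda>y. subst \<mu> (\<rho>' y)) (\<delta> x)" using d(2) x by (simp add: subst_subst)
      finally show "\<sigma> x = subst (\<lambda>y. subst \<mu> (\<rho>' y)) (\<delta> x)" .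
    qed
    then show False using nonin d(1) by blast
  qed
qed



fun hd_ann :: "('f, 'v) trm \<Rightarrow> bool" where
  "hd_ann (TVar x) = False"
| "hd_ann (TFun f b ts) = b"

lemma ann_at_iff: "ann_at t p \<longleftrightarrow> valid_pos t p \<and> hd_ann (subt_at t p)"
  unfolding ann_at_def poss_def by (cases "subt_at t p") auto

lemma valid_flat_iff: "valid_pos t p = valid_pos (flat t) p" by simp

lemma hd_ann_flat[simp]: "hd_ann (flat u) = False"
  by (cases u) auto

lemma ann_flat: "flat t = t \<Longrightarrow> \<not> ann_at t p"
proof
  assume f: "flat t = t" and a: "ann_at t p"
  then have v: "valid_pos t p" and h: "hd_ann (subt_at t p)" by (auto simp: ann_at_iff)
  have "subt_at (flat t) p = flat (subt_at t p)" by (rule subt_flat[OF v])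
  then have "subt_at t p = flat (subt_at t p)" using f by simp
  then show False using h hd_ann_flat by metis
qed

lemma replace_in:
  "valid_pos s \<pi> \<Longrightarrow> valid_pos (replace_at s \<pi> x) (\<pi> @ q) = valid_pos x q \<and> subt_at (replace_at s \<pi> x) (\<pi> @ q) = subt_at x q"
proof (induction \<pi> arbitrary: s)
  case Nil then show ?case by simp
next
  case (Cons i \<pi>) then show ?case by (cases s) auto
qed

lemma replace_out:
  "valid_pos s \<pi> \<Longrightarrow> \<not> (\<exists>q. p = \<pi> @ q) \<Longrightarrow>
    valid_pos (replace_at s \<pi> x) p = valid_pos s p \<and>
    hd_ann (subt_at (replace_at s \<pi> x) p) = hd_ann (subt_at s p) \<and>
    (\<not> (\<exists>q. \<pi> = p @ q) \<longrightarrow> subt_at (replace_at s \<pi> x) p = subt_at s p)"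
proof (induction \<pi> arbitrary: s p)
  case Nil then show ?case by simp
next
  case (Cons i \<pi>)
  then obtain f b ts where s: "s = TFun f b ts" and i: "i < length ts" and v: "valid_pos (ts ! i) \<pi>"
    by (cases s) auto
  show ?case
  proof (cases p)
    case Nil then show ?thesis using s by simp
  next
    case (Cons j p')
    show ?thesis
    proof (cases "j = i")
      case True
      have "\<not> (\<exists>q. p' = \<pi> @ q)" using Cons.prems(2) Cons True by auto
      from Cons.IH[OF v this] show ?thesis using s i Cons True by auto
    next
      case False then show ?thesis using s i Cons by auto
    qed
  qed
qed

lemma flat_replace: "valid_pos s \<pi> \<Longrightarrow> flat (replace_at s \<pi> x) = replace_at (flat s) \<pi> (flat x)"
proof (induction \<pi> arbitrary: s)
  case Nil then show ?case by simp
next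
  case (Cons i \<pi>)
  then obtain f b ts where s: "s = TFun f b ts" and i: "i < length ts" and v: "valid_pos (ts ! i) \<pi>"
    by (cases s) auto
  then show ?case using Cons.IH[OF v] by (simp add: map_update)
qed

lemma flat_flat_above: "flat (flat_above s \<pi>) = flat s"
proof (induction \<pi> arbitrary: s)
  case Nil then show ?case by simp
next
  case (Cons i \<pi>)
  show ?case
  proof (cases s)
    case (TVar x) then show ?thesis by simp
  next
    case (TFun f b ts)
    then show ?thesis using Cons.IH
      by (cases "i < length ts") (simp_all add: map_update list_update_same_conv list_update_beyond)
  qed
qed

lemma ann_flat_above: "ann_at (flat_above s \<pi>) p \<longleftrightarrow> ann_at s p \<and> \<not> (\<exists>q. \<pi> = p @ q \<and> q \<noteq> [])"
proof (induction \<pi> arbitrary: s p)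
  case Nil then show ?case by simp
next
  case (Cons i \<pi>)
  show ?case
  proof (cases s)
    case (TVar x) then show ?thesis by (simp add: ann_at_iff)
  next
    case (TFun f b ts)
    show ?thesis
    proof (cases p)
      case Nil then show ?thesis using TFun by (simp add: ann_at_iff)
    next
      case (Cons j p')
      show ?thesis
      proof (cases "j = i \<and> i < length ts")
        case True
        then show ?thesis using TFun Cons Cons.IH[of "ts ! i" p'] by (auto simp: ann_at_iff)
      next
        case False
        then show ?thesis using TFun Cons by (auto simp: ann_at_iff)
      qed
    qed
  qed
qed

definition sim :: "(('f, 'v) trm \<Rightarrow> bool) \<Rightarrow> ('f, 'v) trm \<Rightarrow> ('f, 'v) trm \<Rightarrow> bool" where
  "sim X s s' \<longleftrightarrow> flat s = flat s' \<and> (\<forall>p. ann_at s p \<and> \<not> ann_at s' p \<longrightarrow> X (subt_at (flat s) p))"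

lemma sim_refl: "sim X s s"
  by (simp add: sim_def)

lemma sim_flat_above: "sim X s s' \<Longrightarrow> sim X (flat_above s \<pi>) (flat_above s' \<pi>)"
  unfolding sim_def by (auto simp: flat_flat_above ann_flat_above)

lemma sim_replace:
  assumes S: "sim X s s'" and v: "valid_pos s \<pi>"
    and above: "\<forall>p q. \<pi> = p @ q \<longrightarrow> q \<noteq> [] \<longrightarrow> ann_at s p \<longrightarrow> ann_at s' p"
    and Sx: "sim X x x'"
  shows "sim X (replace_at s \<pi> x) (replace_at s' \<pi> x')"
proof -
  have fe: "flat s = flat s'" and fx: "flat x = flat x'" using S Sx by (auto simp: sim_def)
  have v': "valid_pos s' \<pi>" using v fe valid_flat_iff by metis
  have fr: "flat (replace_at s \<pi> x) = flat (replace_at s' \<pi> x')"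
    using flat_replace[OF v] flat_replace[OF v'] fe fx by simp
  have "X (subt_at (flat (replace_at s \<pi> x)) p)"
    if a: "ann_at (replace_at s \<pi> x) p" "\<not> ann_at (replace_at s' \<pi> x') p" for p
  proof (cases "\<exists>q. p = \<pi> @ q")
    case True
    then obtain q where p: "p = \<pi> @ q" by blast
    have "ann_at x q" "\<not> ann_at x' q" using a replace_in[OF v] replace_in[OF v'] by (auto simp: ann_at_iff p)
    then have "X (subt_at (flat x) q)" using Sx by (auto simp: sim_def)
    moreover have "valid_pos (flat s) \<pi>" using v by simp
    ultimately show ?thesis using replace_in[of "flat s" \<pi> "flat x" q] flat_replace[OF v] p by simp
  next
    case False
    note o = replace_out[OF v False, of x] replace_out[OF v' False, of x']
    have vp: "valid_pos s p" using a(1) o by (auto simp: ann_at_iff)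
    have as: "ann_at s p" "\<not> ann_at s' p" using a o by (auto simp: ann_at_iff)
    show ?thesis
    proof (cases "\<exists>q. \<pi> = p @ q")
      case True
      then obtain q where "\<pi> = p @ q" by blast
      moreover have "q \<noteq> []" using False calculation by auto
      ultimately show ?thesis using above as by blast
    next
      case nP: False
      have "X (subt_at (flat s) p)" using S as by (auto simp: sim_def)
      moreover have "\<not> (\<exists>q. p = \<pi> @ q)" using False .
      ultimately show ?thesis
        using replace_out[of "flat s" \<pi> p "flat x"] v nP flat_replace[OF v] by simp
    qed
  qed
  then show ?thesis using fr by (simp add: sim_def)
qed

lemma sim_step:
  assumes S: "sim X s s'" and v: "valid_pos s \<pi>"
    and above: "\<forall>p q. \<pi> = p @ q \<longrightarrow> q \<noteq> [] \<longrightarrow> ann_at s p \<longrightarrow> ann_at s' p"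
    and Sx: "sim X (subst \<sigma> (if ann_at s \<pi> then r else flat r)) (subst \<sigma>' (if ann_at s' \<pi> then r2 else flat r2))"
  shows "sim X (step_result s \<pi> \<sigma> m r) (step_result s' \<pi> \<sigma>' m r2)"
proof -
  note R = sim_replace[OF S v above Sx]
  show ?thesis
  proof (cases m)
    case True then show ?thesis using R by (simp only: step_result_def Let_def if_True)
  next
    case False then show ?thesis using sim_flat_above[OF R, of \<pi>] by (simp only: step_result_def Let_def if_False)
  qed
qed

lemma ann_subst: "(\<forall>x\<in>vars w. flat (\<sigma> x) = \<sigma> x) \<Longrightarrow> ann_at (subst \<sigma> w) p \<longleftrightarrow> ann_at w p"
proof (induction p arbitrary: w)
  case Nil
  show ?case
  proof (cases w)
    case (TVar x)
    then have "flat (\<sigma> x) = \<sigma> x" using Nil by simp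
    then have "hd_ann (\<sigma> x) = False" using hd_ann_flat by metis
    then show ?thesis using TVar by (simp add: ann_at_iff)
  next
    case (TFun f b ts) then show ?thesis by (simp add: ann_at_iff)
  qed
next
  case (Cons i p)
  show ?case
  proof (cases w)
    case (TVar x)
    then show ?thesis using Cons.prems ann_flat[of "\<sigma> x"] by (auto simp: ann_at_iff)
  next
    case (TFun f b ts)
    show ?thesis
    proof (cases "i < length ts")
      case True
      then have "\<forall>x\<in>vars (ts ! i). flat (\<sigma> x) = \<sigma> x" using Cons.prems TFun by auto
      then show ?thesis using Cons.IH[of "ts ! i"] TFun True by (auto simp: ann_at_iff)
    next
      case False then show ?thesis using TFun by (auto simp: ann_at_iff)
    qed
  qed
qed

lemma sim_subst:
  assumes un: "\<forall>x\<in>vars w1. flat (\<sigma> x) = \<sigma> x" and fe: "flat w1 = flat w2"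
    and D: "\<forall>p. ann_at w1 p \<and> \<not> ann_at w2 p \<longrightarrow> X (subst \<sigma> (subt_at (flat w1) p))"
  shows "sim X (subst \<sigma> w1) (subst \<sigma> w2)"
proof -
  have vv: "vars w2 = vars w1" using fe vars_flat by metis
  have un2: "\<forall>x\<in>vars w2. flat (\<sigma> x) = \<sigma> x" using un vv by simp
  have ff: "flat (subst \<sigma> w) = subst \<sigma> (flat w)" if "\<forall>x\<in>vars w. flat (\<sigma> x) = \<sigma> x" for w
    using that by (simp add: flat_subst) (rule subst_cong, simp)
  have fl: "flat (subst \<sigma> w1) = flat (subst \<sigma> w2)" using ff[OF un] ff[OF un2] fe by simp
  have "X (subt_at (flat (subst \<sigma> w1)) p)"
    if "ann_at (subst \<sigma> w1) p" "\<not> ann_at (subst \<sigma> w2) p" for p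
  proof -
    have a: "ann_at w1 p" "\<not> ann_at w2 p" using that ann_subst[OF un] ann_subst[OF un2] by auto
    then have "valid_pos (flat w1) p" by (simp add: ann_at_iff)
    then have "subt_at (subst \<sigma> (flat w1)) p = subst \<sigma> (subt_at (flat w1) p)" using valid_subst by blast
    then show ?thesis using D a ff[OF un] by simp
  qed
  then show ?thesis using fl by (simp add: sim_def)
qed



fun build :: "(pos \<Rightarrow> ('f, 'v) trm \<Rightarrow> nat \<Rightarrow> ('f, 'v) trm) \<Rightarrow> ('f, 'v) trm \<Rightarrow> pos \<Rightarrow> ('f, 'v) trm" where
  "build F s0 [] = s0"
| "build F s0 (i # rv) = F (rev rv) (build F s0 rv) i"

definition tstep ::
  "('f, 'v) adp set \<Rightarrow> ('f, 'v) adp set \<Rightarrow> ('f, 'v) adp set \<Rightarrow> (('f, 'v) trm \<Rightarrow> ('f, 'v) trm \<Rightarrow> bool) \<Rightarrow>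
   ('f, 'v) trm \<Rightarrow> ('f, 'v) trm \<Rightarrow> ('f, 'v) adp \<Rightarrow> pos \<Rightarrow> ('v \<Rightarrow> ('f, 'v) trm) \<Rightarrow>
   ('f, 'v) adp \<Rightarrow> ('v \<Rightarrow> ('f, 'v) trm) \<Rightarrow> bool" where
  "tstep P2 S1 S2 R s s' a \<pi> \<sigma> a' \<sigma>' \<longleftrightarrow>
     a' \<in> P2 \<and> \<pi> \<in> poss s' \<and> flat (subt_at s' \<pi>) = subst \<sigma>' (adp_lhs a') \<and>
     arg_NF P2 (subst \<sigma>' (adp_lhs a')) \<and> map fst (adp_rhs a') = map fst (adp_rhs a) \<and>
     (\<forall>i < length (adp_rhs a). R (step_result s \<pi> \<sigma> (adp_flag a) (snd (adp_rhs a ! i)))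
                                  (step_result s' \<pi> \<sigma>' (adp_flag a') (snd (adp_rhs a' ! i)))) \<and>
     (a \<in> S1 \<and> ann_at s \<pi> \<longrightarrow> a' \<in> S2 \<and> ann_at s' \<pi>)"

lemma infsum_ennreal_mono_set:
  fixes f :: "'a \<Rightarrow> ennreal"
  assumes "A \<subseteq> B" shows "infsum f A \<le> infsum f B"
proof -
  have "infsum f A = (SUP F\<in>{F. finite F \<and> F \<subseteq> A}. sum f F)" by (rule nonneg_infsum_complete) simp
  also have "\<dots> \<le> (SUP F\<in>{F. finite F \<and> F \<subseteq> B}. sum f F)"
    by (rule SUP_subset_mono) (use assms in auto)
  also have "\<dots> = infsum f B" by (rule nonneg_infsum_complete[symmetric]) simp
  finally show ?thesis .
qed

lemma inner_info:
  assumes ct: "chain_tree P T" and inn: "ct_inner T v"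
  shows "\<exists>\<sigma>. fst (ct_step T v) \<in> P \<and> snd (ct_step T v) \<in> poss (ct_term T v) \<and>
      flat (subt_at (ct_term T v) (snd (ct_step T v))) = subst \<sigma> (adp_lhs (fst (ct_step T v))) \<and>
      arg_NF P (subst \<sigma> (adp_lhs (fst (ct_step T v)))) \<and>
      (\<forall>i. v @ [i] \<in> ct_nodes T \<longleftrightarrow> i < length (adp_rhs (fst (ct_step T v)))) \<and>
      (\<forall>i < length (adp_rhs (fst (ct_step T v))).
          ct_prob T (v @ [i]) = ct_prob T v * fst (adp_rhs (fst (ct_step T v)) ! i) \<and>
          ct_term T (v @ [i]) = step_result (ct_term T v) (snd (ct_step T v)) \<sigma> (adp_flag (fst (ct_step T v)))
             (snd (adp_rhs (fst (ct_step T v)) ! i)))"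
proof -
  from ct inn obtain \<mu> where st: "adp_step P (ct_term T v) (fst (ct_step T v)) (snd (ct_step T v)) \<mu>"
    and ch: "\<forall>i. v @ [i] \<in> ct_nodes T \<longleftrightarrow> i < length \<mu>"
    and pr: "\<forall>i < length \<mu>. ct_prob T (v @ [i]) = ct_prob T v * fst (\<mu> ! i) \<and> ct_term T (v @ [i]) = snd (\<mu> ! i)"
    unfolding chain_tree_def by blast
  from st obtain \<sigma> where
    a: "fst (ct_step T v) \<in> P" "snd (ct_step T v) \<in> poss (ct_term T v)"
    "flat (subt_at (ct_term T v) (snd (ct_step T v))) = subst \<sigma> (adp_lhs (fst (ct_step T v)))"
    "arg_NF P (subst \<sigma> (adp_lhs (fst (ct_step T v))))"
    and mu: "\<mu> = map (\<lambda>(p, r). (p, step_result (ct_term T v) (snd (ct_step T v)) \<sigma> (adp_flag (fst (ct_step T v))) r))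
                 (adp_rhs (fst (ct_step T v)))"
    unfolding adp_step_def by blast
  show ?thesis
    by (rule exI[of _ \<sigma>]) (use a ch pr in \<open>auto simp: mu split: prod.splits\<close>)
qed

lemma tree_sim:
  fixes T :: "('f, 'v) ctree"
  assumes ct: "chain_tree P1 T"
    and init: "R (ct_term T []) s0"
    and trans: "\<And>s s' a \<pi> \<sigma>. R s s' \<Longrightarrow> a \<in> P1 \<Longrightarrow> \<pi> \<in> poss s \<Longrightarrow>
       flat (subt_at s \<pi>) = subst \<sigma> (adp_lhs a) \<Longrightarrow> arg_NF P1 (subst \<sigma> (adp_lhs a)) \<Longrightarrow>
       \<exists>a' \<sigma>'. tstep P2 S1 S2 R s s' a \<pi> \<sigma> a' \<sigma>'"
  shows "\<exists>T'. chain_tree P2 T' \<and> ct_term T' [] = s0 \<and> edl S1 T \<le> edl S2 T'"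
proof -
  define oa where "oa v = fst (ct_step T v)" for v
  define op where "op v = snd (ct_step T v)" for v
  define ot where "ot v = ct_term T v" for v
  define OS where "OS v \<sigma> \<longleftrightarrow> oa v \<in> P1 \<and> op v \<in> poss (ot v) \<and>
      flat (subt_at (ot v) (op v)) = subst \<sigma> (adp_lhs (oa v)) \<and>
      arg_NF P1 (subst \<sigma> (adp_lhs (oa v))) \<and>
      (\<forall>i. v @ [i] \<in> ct_nodes T \<longleftrightarrow> i < length (adp_rhs (oa v))) \<and>
      (\<forall>i < length (adp_rhs (oa v)).
          ct_prob T (v @ [i]) = ct_prob T v * fst (adp_rhs (oa v) ! i) \<and>
          ct_term T (v @ [i]) = step_result (ot v) (op v) \<sigma> (adp_flag (oa v)) (snd (adp_rhs (oa v) ! i)))" for v \<sigma>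
  define osig where "osig v = (SOME \<sigma>. OS v \<sigma>)" for v
  have OSi: "OS v (osig v)" if "ct_inner T v" for v
  proof -
    have "\<exists>\<sigma>. OS v \<sigma>" using inner_info[OF ct that] unfolding OS_def oa_def op_def ot_def .
    then show ?thesis unfolding osig_def by (rule someI_ex)
  qed
  define ch where "ch v s' = (SOME (a', \<sigma>'). tstep P2 S1 S2 R (ot v) s' (oa v) (op v) (osig v) a' \<sigma>')" for v s'
  define F where "F v s' i = step_result s' (op v) (snd (ch v s')) (adp_flag (fst (ch v s'))) (snd (adp_rhs (fst (ch v s')) ! i))"
    for v s' i
  define nt where "nt v = build F s0 (rev v)" for v
  have nt0: "nt [] = s0" by (simp add: nt_def)
  have ntS: "nt (v @ [i]) = F v (nt v) i" for v i by (simp add: nt_def)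
  have chS: "tstep P2 S1 S2 R (ot v) s' (oa v) (op v) (osig v) (fst (ch v s')) (snd (ch v s'))"
    if "ct_inner T v" "R (ot v) s'" for v s'
  proof -
    from OSi[OF that(1)] have "oa v \<in> P1" "op v \<in> poss (ot v)"
      "flat (subt_at (ot v) (op v)) = subst (osig v) (adp_lhs (oa v))"
      "arg_NF P1 (subst (osig v) (adp_lhs (oa v)))" unfolding OS_def by auto
    from trans[OF that(2) this] have "\<exists>x. (case x of (a', \<sigma>') \<Rightarrow> tstep P2 S1 S2 R (ot v) s' (oa v) (op v) (osig v) a' \<sigma>')"
      by auto
    then have "case ch v s' of (a', \<sigma>') \<Rightarrow> tstep P2 S1 S2 R (ot v) s' (oa v) (op v) (osig v) a' \<sigma>'"
      unfolding ch_def by (rule someI_ex)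
    then show ?thesis by (simp split: prod.splits)
  qed
  have prefix: "v \<in> ct_nodes T" if "v @ [i] \<in> ct_nodes T" for v i
    using ct that unfolding chain_tree_def by blast
  have inv: "R (ot v) (nt v)" if "v \<in> ct_nodes T" for v
    using that
  proof (induction v rule: rev_induct)
    case Nil then show ?case using init by (simp add: nt0 ot_def)
  next
    case (snoc i v)
    have vn: "v \<in> ct_nodes T" using prefix snoc.prems by blast
    have inn: "ct_inner T v" using vn snoc.prems by (auto simp: ct_inner_def)
    have IH: "R (ot v) (nt v)" using snoc.IH vn by blast
    have os: "OS v (osig v)" by (rule OSi[OF inn])
    have il: "i < length (adp_rhs (oa v))" using os snoc.prems unfolding OS_def by blast
    have "ot (v @ [i]) = step_result (ot v) (op v) (osig v) (adp_flag (oa v)) (snd (adp_rhs (oa v) ! i))"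
      using os il unfolding OS_def ot_def by blast
    moreover have "nt (v @ [i]) = F v (nt v) i" by (rule ntS)
    moreover note chS[OF inn IH]
    ultimately show ?case using il unfolding tstep_def F_def by auto
  qed
  define T' where "T' = (ct_nodes T, ct_prob T, nt, \<lambda>v. (fst (ch v (nt v)), op v))"
  have T'simps: "ct_nodes T' = ct_nodes T" "ct_prob T' = ct_prob T" "ct_term T' = nt"
    "ct_step T' v = (fst (ch v (nt v)), op v)" for v
    by (simp_all add: T'_def ct_nodes_def ct_prob_def ct_term_def ct_step_def)
  have inn': "ct_inner T' v = ct_inner T v" for v by (simp add: ct_inner_def T'simps)
  have "chain_tree P2 T'"
    unfolding chain_tree_def
  proof (intro conjI allI impI)
    show "[] \<in> ct_nodes T'" using ct by (simp add: T'simps chain_tree_def)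
    show "ct_prob T' [] = 1" using ct by (simp add: T'simps chain_tree_def)
    show "v \<in> ct_nodes T'" if "v @ [i] \<in> ct_nodes T'" for v i using prefix that by (simp add: T'simps)
  next
    fix v assume "ct_inner T' v"
    then have inn: "ct_inner T v" by (simp add: inn')
    then have vn: "v \<in> ct_nodes T" by (simp add: ct_inner_def)
    have os: "OS v (osig v)" by (rule OSi[OF inn])
    have ts: "tstep P2 S1 S2 R (ot v) (nt v) (oa v) (op v) (osig v) (fst (ch v (nt v))) (snd (ch v (nt v)))"
      by (rule chS[OF inn inv[OF vn]])
    define a' where "a' = fst (ch v (nt v))"
    define \<sigma>' where "\<sigma>' = snd (ch v (nt v))"
    define \<mu> where "\<mu> = map (\<lambda>(p, r). (p, step_result (nt v) (op v) \<sigma>' (adp_flag a') r)) (adp_rhs a')"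
    have mf: "map fst (adp_rhs a') = map fst (adp_rhs (oa v))" using ts unfolding tstep_def a'_def by blast
    then have len: "length (adp_rhs a') = length (adp_rhs (oa v))" using map_eq_imp_length_eq by blast
    have fsti: "fst (adp_rhs a' ! i) = fst (adp_rhs (oa v) ! i)" if "i < length (adp_rhs (oa v))" for i
      using mf that len by (metis nth_map)
    have "adp_step P2 (ct_term T' v) (fst (ct_step T' v)) (snd (ct_step T' v)) \<mu>"
      using ts unfolding adp_step_def tstep_def T'simps a'_def \<sigma>'_def \<mu>_def by auto
    moreover have "\<forall>i. v @ [i] \<in> ct_nodes T' \<longleftrightarrow> i < length \<mu>"
      using os len unfolding OS_def \<mu>_def T'simps by simp
    moreover have "\<forall>i < length \<mu>. ct_prob T' (v @ [i]) = ct_prob T' v * fst (\<mu> ! i) \<and> ct_term T' (v @ [i]) = snd (\<mu> ! i)"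
    proof (intro allI impI)
      fix i assume "i < length \<mu>"
      then have i: "i < length (adp_rhs (oa v))" using len by (simp add: \<mu>_def)
      have "ct_prob T' (v @ [i]) = ct_prob T' v * fst (\<mu> ! i)"
        using os i fsti[OF i] len unfolding OS_def T'simps \<mu>_def by (auto split: prod.splits)
      moreover have "ct_term T' (v @ [i]) = snd (\<mu> ! i)"
        using i len unfolding T'simps ntS F_def \<mu>_def a'_def \<sigma>'_def by (auto split: prod.splits)
      ultimately show "ct_prob T' (v @ [i]) = ct_prob T' v * fst (\<mu> ! i) \<and> ct_term T' (v @ [i]) = snd (\<mu> ! i)" ..
    qed
    ultimately show "\<exists>\<mu>. adp_step P2 (ct_term T' v) (fst (ct_step T' v)) (snd (ct_step T' v)) \<mu> \<and>
             (\<forall>i. v @ [i] \<in> ct_nodes T' \<longleftrightarrow> i < length \<mu>) \<and>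
             (\<forall>i < length \<mu>. ct_prob T' (v @ [i]) = ct_prob T' v * fst (\<mu> ! i) \<and>
                              ct_term T' (v @ [i]) = snd (\<mu> ! i))" by blast
  qed
  moreover have "ct_term T' [] = s0" by (simp add: T'simps nt0)
  moreover have "edl S1 T \<le> edl S2 T'"
    unfolding edl_def T'simps(2)
  proof (rule infsum_ennreal_mono_set)
    show "{v. ct_inner T v \<and> fst (ct_step T v) \<in> S1 \<and> ann_at (ct_term T v) (snd (ct_step T v))}
      \<subseteq> {v. ct_inner T' v \<and> fst (ct_step T' v) \<in> S2 \<and> ann_at (ct_term T' v) (snd (ct_step T' v))}"
    proof
      fix v assume "v \<in> {v. ct_inner T v \<and> fst (ct_step T v) \<in> S1 \<and> ann_at (ct_term T v) (snd (ct_step T v))}"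
      then have inn: "ct_inner T v" and c: "oa v \<in> S1" "ann_at (ot v) (op v)"
        by (auto simp: oa_def ot_def op_def)
      have vn: "v \<in> ct_nodes T" using inn by (simp add: ct_inner_def)
      have "tstep P2 S1 S2 R (ot v) (nt v) (oa v) (op v) (osig v) (fst (ch v (nt v))) (snd (ch v (nt v)))"
        by (rule chS[OF inn inv[OF vn]])
      then have "fst (ch v (nt v)) \<in> S2 \<and> ann_at (nt v) (op v)" using c unfolding tstep_def by blast
      then show "v \<in> {v. ct_inner T' v \<and> fst (ct_step T' v) \<in> S2 \<and> ann_at (ct_term T' v) (snd (ct_step T' v))}"
        using inn by (simp add: inn' T'simps)
    qed
  qed
  ultimately show ?thesis by blast
qed

lemma edh_le:
  assumes "\<And>T. chain_tree P1 T \<Longrightarrow> ct_term T [] = sharp t \<Longrightarrow>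
     \<exists>T'. chain_tree P2 T' \<and> ct_term T' [] = sharp t \<and> edl S1 T \<le> edl S2 T'"
  shows "edh P1 S1 t \<le> edh P2 S2 t"
  unfolding edh_def
proof (rule SUP_least)
  fix T assume "T \<in> {T. chain_tree P1 T \<and> ct_term T [] = sharp t}"
  then obtain T' where "chain_tree P2 T'" "ct_term T' [] = sharp t" "edl S1 T \<le> edl S2 T'" using assms by blast
  then show "edl S1 T \<le> (SUP T\<in>{T. chain_tree P2 T \<and> ct_term T [] = sharp t}. edl S2 T)"
    by (intro SUP_upper2[of T']) auto
qed



lemma flat_sharp_aux: "flat (sharp_pos_aux \<Phi> p0 r) = flat r"
proof (induction r arbitrary: p0)
  case (TVar x) then show ?case by simp
next
  case (TFun f b ts)
  have "map flat (map (\<lambda>(i, t). sharp_pos_aux \<Phi> (p0 @ [i]) t) (zip [0..<length ts] ts)) = map flat ts"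
    by (rule nth_equalityI) (auto simp: TFun.IH)
  then show ?case by simp
qed

lemma ann_sharp_aux: "ann_at (sharp_pos_aux \<Phi> p0 r) p \<longleftrightarrow> p0 @ p \<in> \<Phi> \<and> valid_pos r p \<and> is_TFun (subt_at r p)"
proof (induction r arbitrary: p0 p)
  case (TVar x) then show ?case by (cases p) (auto simp: ann_at_iff is_TFun_def)
next
  case (TFun f b ts)
  show ?case
  proof (cases p)
    case Nil then show ?thesis by (auto simp: ann_at_iff is_TFun_def)
  next
    case (Cons i p')
    show ?thesis
    proof (cases "i < length ts")
      case True
      have "ann_at (sharp_pos_aux \<Phi> p0 (TFun f b ts)) (i # p') = ann_at (sharp_pos_aux \<Phi> (p0 @ [i]) (ts ! i)) p'"
        using True by (simp add: ann_at_iff)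
      then show ?thesis using TFun.IH[OF nth_mem[OF True], of "p0 @ [i]" p'] True Cons by simp
    next
      case False then show ?thesis using Cons by (simp add: ann_at_iff)
    qed
  qed
qed

lemma flat_sharp: "flat (sharp_pos \<Phi> r) = flat r"
  by (simp add: sharp_pos_def flat_sharp_aux)

lemma ann_sharp: "ann_at (sharp_pos \<Phi> r) p \<longleftrightarrow> p \<in> \<Phi> \<and> valid_pos r p \<and> is_TFun (subt_at r p)"
  by (simp add: sharp_pos_def ann_sharp_aux)

lemma capt_ann: "\<pi> \<in> capt P l \<delta>s r \<Longrightarrow> ann_at r \<pi>"
  by (auto simp: capt_def ann_subterm_at_def)

lemma ann_sharp_capt: "ann_at (sharp_pos (capt P l \<delta>s r) r) p \<longleftrightarrow> p \<in> capt P l \<delta>s r"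
  using capt_ann[of p P l \<delta>s r] unfolding ann_sharp by (auto simp: ann_at_def is_TFun_def poss_def)

lemma sim_subst2:
  assumes "\<forall>x\<in>vars w1. flat (\<sigma> x) = \<sigma> x" "flat w1 = flat w2" "\<forall>p. ann_at w1 p \<longrightarrow> ann_at w2 p"
  shows "sim X (subst \<sigma> w1) (subst \<sigma> w2)"
  by (rule sim_subst) (use assms in auto)

lemma nth_map_pair: "i < length rs \<Longrightarrow> map (\<lambda>(p, r). (p, f r)) rs ! i = (fst (rs ! i), f (snd (rs ! i)))"
  by (simp add: case_prod_beta)

lemma NF_transfer:
  assumes "\<forall>a\<in>Q1. \<forall>\<sigma>. \<exists>a2\<in>Q2. \<exists>\<sigma>2. subst \<sigma> (adp_lhs a) = subst \<sigma>2 (adp_lhs a2)"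
  shows "NF Q2 s \<Longrightarrow> NF Q1 s"
  using assms unfolding NF_def by metis

lemma iota_mono:
  assumes le: "\<And>n. f n \<le> g n" shows "iota f \<le> iota g"
proof -
  have pol: "in_Pol f a" if "in_Pol g a" for a
    using that unfolding in_Pol_def by (auto elim!: eventually_mono intro: order_trans[OF le])
  have ex: "in_Exp f" if "in_Exp g"
  proof -
    from that obtain c a where ev: "eventually (\<lambda>n. g n \<le> ennreal (c * 2 ^ (n ^ a))) at_top"
      unfolding in_Exp_def by blast
    have "eventually (\<lambda>n. f n \<le> ennreal (c * 2 ^ (n ^ a))) at_top"
      using ev by (rule eventually_mono) (rule order_trans[OF le])
    then show ?thesis unfolding in_Exp_def by blast
  qed
  have tex: "in_TwoExp f" if "in_TwoExp g"
  proof -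
    from that obtain c a where ev: "eventually (\<lambda>n. g n \<le> ennreal (c * 2 ^ (2 ^ (n ^ a)))) at_top"
      unfolding in_TwoExp_def by blast
    have "eventually (\<lambda>n. f n \<le> ennreal (c * 2 ^ (2 ^ (n ^ a)))) at_top"
      using ev by (rule eventually_mono) (rule order_trans[OF le])
    then show ?thesis unfolding in_TwoExp_def by blast
  qed
  have fin: "\<forall>n. f n \<noteq> top" if "\<forall>n. g n \<noteq> top"
    using that le by (metis top.extremum_unique)
  have leO: "x \<le> Omega" for x :: cplx by (cases x) (auto simp: less_eq_cplx_def)
  show ?thesis
  proof (cases "\<exists>a. in_Pol g a")
    case True
    define a0 where "a0 = (LEAST a. in_Pol g a)"
    have g0: "in_Pol g a0" unfolding a0_def using True by (metis LeastI)
    then have f0: "in_Pol f a0" by (rule pol)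
    have "(LEAST a. in_Pol f a) \<le> a0" using f0 by (rule Least_le)
    then show ?thesis using True f0 unfolding iota_def a0_def[symmetric]
      by (auto simp: less_eq_cplx_def)
  next
    case nP: False
    show ?thesis
    proof (cases "in_Exp g")
      case True
      then show ?thesis using nP ex[OF True] unfolding iota_def by (auto simp: less_eq_cplx_def)
    next
      case nE: False
      show ?thesis
      proof (cases "in_TwoExp g")
        case True
        then show ?thesis using nP nE tex[OF True] unfolding iota_def by (auto simp: less_eq_cplx_def)
      next
        case nT: False
        show ?thesis
        proof (cases "\<forall>n. g n \<noteq> top")
          case True
          then show ?thesis using nP nE nT fin[OF True] unfolding iota_def by (auto simp: less_eq_cplx_def)
        next
          case False
          then show ?thesis using nP nE nT leO unfolding iota_def by auto
        qed
      qed
    qed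
  qed
qed

lemma iota_prob_mono:
  assumes "basic F Q1 = basic F Q2" and "\<And>t. edh Q1 S1 t \<le> edh Q2 S2 t"
  shows "iota_prob F (Q1, S1) \<le> iota_prob F (Q2, S2)"
  unfolding iota_prob_def
  by (simp, rule iota_mono, rule SUP_mono) (use assms in auto)



lemma vars_sharp: "vars (sharp_pos \<Phi> r) = vars r"
  by (metis flat_sharp vars_flat)

theorem mainTheorem9:
  fixes F :: "('f \<times> nat) set"
    and P P' S :: "('f, 'v) adp set"
    and l :: "('f, 'v) trm" and rs :: "(real \<times> ('f, 'v) trm) list" and m :: bool
    and j :: nat and t :: "('f, 'v) trm" and \<delta>s :: "('v \<Rightarrow> ('f, 'v) trm) list"
  assumes "infinite (UNIV :: 'v set)"
    and "finite F"
    and "wf_problem F (P, S)"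
    and "P = insert (l, rs, m) P'" and "(l, rs, m) \<notin> P'"
    and "j < length rs"
    and "ann_subterm t (snd (rs ! j))"
    and "\<forall>\<delta> \<in> set \<delta>s. narrowing_subst P l t \<delta>"
    and "captured P l t \<delta>s"
  shows "sound_output F (P, S) (Pol 0)
           {(P' \<union> roi_N P l rs m \<delta>s, roi_S S (l, rs, m) (roi_N P l rs m \<delta>s))}"
proof -
  note inf = assms(1)
  define \<alpha> where "\<alpha> = (l, rs, m)"
  define N where "N = roi_N P l rs m \<delta>s"
  define P2 where "P2 = P' \<union> N"
  define S2 where "S2 = roi_S S \<alpha> N"
  define C where "C r = capt P l \<delta>s r" for r
  define lastR where "lastR = (l, map (\<lambda>(p, r). (p, sharp_pos (C r) r)) rs, m)"
  define instR where "instR \<delta> = (subst \<delta> l, map (\<lambda>(p, r). (p, subst \<delta> r)) rs, m)" for \<delta>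
  have N_eq: "N = instR ` set \<delta>s \<union> {lastR}" by (simp add: N_def roi_N_def instR_def lastR_def C_def)
  have Pins: "P = insert \<alpha> P'" using assms(4) by (simp add: \<alpha>_def)
  have aP': "\<alpha> \<notin> P'" using assms(5) by (simp add: \<alpha>_def)
  have S2_def': "S2 = (if \<alpha> \<in> S then (S - {\<alpha>}) \<union> N else S)" by (simp add: S2_def roi_S_def)
  from assms(3) have wfP: "\<forall>a\<in>P. wf_adp F a" unfolding wf_problem_def by auto
  have wfv: "vars r \<subseteq> vars (adp_lhs a)" if "a \<in> P" "(p, r) \<in> set (adp_rhs a)" for a p r
    using wfP that unfolding wf_adp_def by fastforce
  have wfa: "wf_adp F \<alpha>" using wfP Pins by simp
  then have lT: "is_TFun l" and lU: "flat l = l"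
    unfolding wf_adp_def \<alpha>_def adp_lhs_def unannotated_def by auto
  have rvi: "vars (snd (rs ! i)) \<subseteq> vars l" if "i < length rs" for i
    using wfv[of \<alpha> "fst (rs ! i)" "snd (rs ! i)"] that Pins
    by (simp add: \<alpha>_def adp_lhs_def adp_rhs_def)
  have lhs_simps: "adp_lhs \<alpha> = l" "adp_rhs \<alpha> = rs" "adp_flag \<alpha> = m"
    "adp_lhs lastR = l" "adp_rhs lastR = map (\<lambda>(p, r). (p, sharp_pos (C r) r)) rs" "adp_flag lastR = m"
    "adp_lhs (instR \<delta>) = subst \<delta> l" "adp_rhs (instR \<delta>) = map (\<lambda>(p, r). (p, subst \<delta> r)) rs"
    "adp_flag (instR \<delta>) = m" for \<delta>
    by (simp_all add: \<alpha>_def lastR_def instR_def adp_lhs_def adp_rhs_def adp_flag_def)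
  have mapfst: "map fst (map (\<lambda>(p, r). (p, g r)) rs) = map fst rs" for g :: "('f, 'v) trm \<Rightarrow> ('f, 'v) trm"
    by (induction rs) auto
  obtain f0 b0 ts0 where l0: "l = TFun f0 b0 ts0" using lT unfolding is_TFun_def by blast
  have def_eq: "defined P2 = defined P"
  proof
    show "defined P2 \<subseteq> defined P"
    proof
      fix z assume "z \<in> defined P2"
      then obtain f b ts a where z: "z = (f, length ts)" "a \<in> P2" "adp_lhs a = TFun f b ts"
        unfolding defined_def by blast
      show "z \<in> defined P"
      proof (cases "a \<in> P'")
        case True then show ?thesis using z Pins unfolding defined_def by blast
      next
        case False
        then have "a \<in> N" using z P2_def by blast
        then have "f = f0 \<and> length ts = length ts0" using z by (auto simp: N_eq lhs_simps l0)
        then show ?thesis using z Pins lhs_simps l0 unfolding defined_def by blast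
      qed
    qed
  next
    show "defined P \<subseteq> defined P2"
    proof
      fix z assume "z \<in> defined P"
      then obtain f b ts a where z: "z = (f, length ts)" "a \<in> P" "adp_lhs a = TFun f b ts"
        unfolding defined_def by blast
      show "z \<in> defined P2"
      proof (cases "a = \<alpha>")
        case True
        have "lastR \<in> P2" by (simp add: P2_def N_eq)
        then show ?thesis using z True lhs_simps unfolding defined_def by auto
      next
        case False then have "a \<in> P2" using z Pins P2_def by blast
        then show ?thesis using z unfolding defined_def by blast
      qed
    qed
  qed
  have basic_eq: "basic F P2 = basic F P" by (rule ext) (simp add: basic_def def_eq)
  have NF_eq: "NF P2 s = NF P s" for s
  proof
    show "NF P2 s \<Longrightarrow> NF P s"
    proof (rule NF_transfer, intro ballI allI)
      fix a \<sigma> assume "a \<in> P"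
      show "\<exists>a2\<in>P2. \<exists>\<sigma>2. subst \<sigma> (adp_lhs a) = subst \<sigma>2 (adp_lhs a2)"
      proof (cases "a = \<alpha>")
        case True
        have "lastR \<in> P2" by (simp add: P2_def N_eq)
        then show ?thesis by (intro bexI[of _ lastR] exI[of _ \<sigma>]) (simp_all add: True lhs_simps)
      next
        case False then have "a \<in> P2" using \<open>a \<in> P\<close> Pins P2_def by blast
        then show ?thesis by blast
      qed
    qed
    show "NF P s \<Longrightarrow> NF P2 s"
    proof (rule NF_transfer, intro ballI allI)
      fix a \<sigma> assume aP2: "a \<in> P2"
      show "\<exists>a2\<in>P. \<exists>\<sigma>2. subst \<sigma> (adp_lhs a) = subst \<sigma>2 (adp_lhs a2)"
      proof (cases "a \<in> P'")
        case True then show ?thesis using Pins by blast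
      next
        case False
        then have "a \<in> N" using aP2 P2_def by blast
        then have "\<exists>\<delta>. adp_lhs a = subst \<delta> l"
        proof (unfold N_eq, elim UnE imageE)
          fix \<delta> assume "a = instR \<delta>" then have "adp_lhs a = subst \<delta> l" by (simp add: lhs_simps)
          then show ?thesis by blast
        next
          assume "a \<in> {lastR}" then have "adp_lhs a = subst TVar l" by (simp add: lhs_simps)
          then show ?thesis by blast
        qed
        then obtain \<delta> where "adp_lhs a = subst \<delta> l" by blast
        then have "subst \<sigma> (adp_lhs a) = subst (\<lambda>x. subst \<sigma> (\<delta> x)) (adp_lhs \<alpha>)"
          by (simp add: lhs_simps subst_subst)
        moreover have "\<alpha> \<in> P" using Pins by simp
        ultimately show ?thesis by blast
      qed
    qed
  qed
  have argNF_eq: "arg_NF P2 s = arg_NF P s" for s by (simp add: arg_NF_def NF_eq)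
  have unfl: "\<forall>x\<in>vars u. flat (\<sigma> x) = \<sigma> x" if "flat w = subst \<sigma> u" for w u and \<sigma> :: "'v \<Rightarrow> ('f, 'v) trm"
  proof -
    have h: "flat (subst \<sigma> u) = subst \<sigma> u" by (simp add: that[symmetric])
    show ?thesis
    proof
      fix x assume "x \<in> vars u" then show "flat (\<sigma> x) = \<sigma> x" by (rule unann_subst_var[OF h])
    qed
  qed
  have sharpC: "ann_at (sharp_pos (C r) r) p \<Longrightarrow> ann_at r p" for r p
    unfolding C_def ann_sharp_capt by (rule capt_ann)
  define R1 where "R1 s s' \<longleftrightarrow> sim (NF P) s s' \<and> sim (\<lambda>_. False) s' s" for s s' :: "('f, 'v) trm"
  have trans1: "\<exists>a' \<sigma>'. tstep P2 S S2 R1 s s' a \<pi> \<sigma> a' \<sigma>'"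
    if R: "R1 s s'" and a: "a \<in> P" and pi: "\<pi> \<in> poss s" and mt: "flat (subt_at s \<pi>) = subst \<sigma> (adp_lhs a)"
      and an: "arg_NF P (subst \<sigma> (adp_lhs a))" for s s' a \<pi> \<sigma>
  proof -
    have R1': "sim (NF P) s s'" and R2': "sim (\<lambda>_. False) s' s" using R by (simp_all add: R1_def)
    have fe: "flat s = flat s'" using R1' by (simp add: sim_def)
    have vp: "valid_pos s \<pi>" using pi by (simp add: poss_def)
    have vp': "valid_pos s' \<pi>" using vp fe valid_flat_iff by metis
    have pi': "\<pi> \<in> poss s'" using vp' by (simp add: poss_def)
    have mt': "flat (subt_at s' \<pi>) = subst \<sigma> (adp_lhs a)"
      using mt subt_flat[OF vp] subt_flat[OF vp'] fe by simp
    have noD: "ann_at s' p" if "ann_at s p" "\<pi> = p @ q" for p q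
    proof (rule ccontr)
      assume "\<not> ann_at s' p"
      then have nf: "NF P (subt_at (flat s) p)" using R1' that(1) unfolding sim_def by blast
      have "valid_pos (flat s) p" "valid_pos (subt_at (flat s) p) q" using vp that(2) valid_append[of "flat s" p q] by simp_all
      then have "NF P (subt_at (subt_at (flat s) p) q)" using NF_subt nf by blast
      then have nfp: "NF P (flat (subt_at s \<pi>))" using that(2) subt_flat[OF vp] by (simp add: subt_append)
      have "flat (flat (subt_at s \<pi>)) \<noteq> subst \<sigma> (adp_lhs a)" by (rule NF_root[OF nfp a])
      moreover have "flat (flat (subt_at s \<pi>)) = flat (subt_at s \<pi>)" by (rule flat_flat)
      ultimately show False using mt by argo
    qed
    have noD': "ann_at s p" if "ann_at s' p" for p
      using R2' that by (simp add: sim_def)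
    have annEq: "ann_at s' \<pi> = ann_at s \<pi>" using noD[of \<pi> "[]"] noD'[of \<pi>] by auto
    have abv1: "\<forall>p q. \<pi> = p @ q \<longrightarrow> q \<noteq> [] \<longrightarrow> ann_at s p \<longrightarrow> ann_at s' p" using noD by blast
    have abv2: "\<forall>p q. \<pi> = p @ q \<longrightarrow> q \<noteq> [] \<longrightarrow> ann_at s' p \<longrightarrow> ann_at s p" using noD' by blast
    have un\<sigma>: "\<forall>x\<in>vars (adp_lhs a). flat (\<sigma> x) = \<sigma> x" by (rule unfl[OF mt])
    have stepR: "R1 (step_result s \<pi> \<sigma>1 mm r1) (step_result s' \<pi> \<sigma>2 mm r2)"
      if "sim (NF P) (subst \<sigma>1 (if ann_at s \<pi> then r1 else flat r1)) (subst \<sigma>2 (if ann_at s' \<pi> then r2 else flat r2))"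
         "sim (\<lambda>_. False) (subst \<sigma>2 (if ann_at s' \<pi> then r2 else flat r2)) (subst \<sigma>1 (if ann_at s \<pi> then r1 else flat r1))"
      for \<sigma>1 \<sigma>2 mm r1 r2
      using sim_step[OF R1' vp abv1 that(1)] sim_step[OF R2' vp' abv2 that(2)] by (simp add: R1_def)
    have stepEq: "R1 (step_result s \<pi> \<sigma>1 mm r1) (step_result s' \<pi> \<sigma>2 mm r2)"
      if "subst \<sigma>1 (if ann_at s \<pi> then r1 else flat r1) = subst \<sigma>2 (if ann_at s' \<pi> then r2 else flat r2)"
      for \<sigma>1 \<sigma>2 mm r1 r2
      by (rule stepR) (simp_all add: that sim_refl)
    show ?thesis
    proof (cases "a = \<alpha>")
      case False
      then have aP': "a \<in> P'" using a Pins by blast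
      have "tstep P2 S S2 R1 s s' a \<pi> \<sigma> a \<sigma>"
        unfolding tstep_def
      proof (intro conjI allI impI)
        show "a \<in> P2" using aP' by (simp add: P2_def)
        show "\<pi> \<in> poss s'" by (rule pi')
        show "flat (subt_at s' \<pi>) = subst \<sigma> (adp_lhs a)" by (rule mt')
        show "arg_NF P2 (subst \<sigma> (adp_lhs a))" using an by (simp add: argNF_eq)
        show "map fst (adp_rhs a) = map fst (adp_rhs a)" by simp
        fix i assume "i < length (adp_rhs a)"
        show "R1 (step_result s \<pi> \<sigma> (adp_flag a) (snd (adp_rhs a ! i))) (step_result s' \<pi> \<sigma> (adp_flag a) (snd (adp_rhs a ! i)))"
          by (rule stepEq) (simp add: annEq)
      next
        assume "a \<in> S \<and> ann_at s \<pi>"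
        then show "a \<in> S2" using False annEq by (auto simp: S2_def')
      next
        assume "a \<in> S \<and> ann_at s \<pi>"
        then show "ann_at s' \<pi>" using annEq by simp
      qed
      then show ?thesis by blast
    next
      case aa: True
      have an': "arg_NF P (subst \<sigma> l)" using an aa by (simp add: lhs_simps)
      have mtl: "flat (subt_at s' \<pi>) = subst \<sigma> l" using mt' aa by (simp add: lhs_simps)
      have un\<sigma>l: "\<forall>x\<in>vars l. flat (\<sigma> x) = \<sigma> x" using un\<sigma> aa by (simp add: lhs_simps)
      have unfs: "flat (subst \<sigma> l) = subst \<sigma> l" using mt aa by (metis flat_flat lhs_simps(1))
      show ?thesis
      proof (cases "\<exists>\<delta>\<in>set \<delta>s. \<exists>\<rho>. \<forall>x\<in>vars l. \<sigma> x = subst \<rho> (\<delta> x)")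
        case True
        then obtain \<delta> \<rho> where d: "\<delta> \<in> set \<delta>s" and dr: "\<forall>x\<in>vars l. \<sigma> x = subst \<rho> (\<delta> x)" by blast
        have sl: "subst \<rho> (subst \<delta> w) = subst \<sigma> w" if "vars w \<subseteq> vars l" for w
          unfolding subst_subst by (rule subst_cong) (use dr that in auto)
        have dun: "flat (\<delta> x) = \<delta> x" if "x \<in> vars l" for x
        proof -
          have "flat (subst \<rho> (\<delta> x)) = subst \<rho> (\<delta> x)" using un\<sigma>l that dr by metis
          then show ?thesis by (rule unann_subst_inv)
        qed
        have "tstep P2 S S2 R1 s s' a \<pi> \<sigma> (instR \<delta>) \<rho>"
          unfolding tstep_def
        proof (intro conjI allI impI)
          show "instR \<delta> \<in> P2" using d by (simp add: P2_def N_eq)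
          show "\<pi> \<in> poss s'" by (rule pi')
          show "flat (subt_at s' \<pi>) = subst \<rho> (adp_lhs (instR \<delta>))" using mtl sl[of l] by (simp add: lhs_simps)
          show "arg_NF P2 (subst \<rho> (adp_lhs (instR \<delta>)))" using an' sl[of l] by (simp add: lhs_simps argNF_eq)
          show "map fst (adp_rhs (instR \<delta>)) = map fst (adp_rhs a)" unfolding aa lhs_simps by (rule mapfst)
          fix i assume "i < length (adp_rhs a)"
          then have i: "i < length rs" by (simp add: aa lhs_simps)
          define r where "r = snd (rs ! i)"
          have vr: "vars r \<subseteq> vars l" using rvi[OF i] by (simp add: r_def)
          have e1: "subst \<rho> (subst \<delta> r) = subst \<sigma> r" using sl[OF vr] .
          have e2: "subst \<rho> (flat (subst \<delta> r)) = subst \<sigma> (flat r)"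
          proof -
            have "subst \<rho> (flat (subst \<delta> r)) = subst (\<lambda>x. subst \<rho> (flat (\<delta> x))) (flat r)"
              by (simp add: flat_subst subst_subst)
            also have "\<dots> = subst \<sigma> (flat r)"
              by (rule subst_cong) (use vr dun dr in auto)
            finally show ?thesis .
          qed
          show "R1 (step_result s \<pi> \<sigma> (adp_flag a) (snd (adp_rhs a ! i)))
                   (step_result s' \<pi> \<rho> (adp_flag (instR \<delta>)) (snd (adp_rhs (instR \<delta>) ! i)))"
          proof -
            have g: "snd (adp_rhs a ! i) = r" "snd (adp_rhs (instR \<delta>) ! i) = subst \<delta> r" "adp_flag a = m" "adp_flag (instR \<delta>) = m"
              by (simp_all add: aa lhs_simps nth_map_pair[OF i] r_def)
            show ?thesis unfolding g by (rule stepEq) (simp add: e1 e2 annEq)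
          qed
        next
          assume "a \<in> S \<and> ann_at s \<pi>"
          then show "instR \<delta> \<in> S2" using aa d annEq by (auto simp: S2_def' N_eq)
        next
          assume "a \<in> S \<and> ann_at s \<pi>"
          then show "ann_at s' \<pi>" using annEq by simp
        qed
        then show ?thesis by blast
      next
        case nonin: False
        have "tstep P2 S S2 R1 s s' a \<pi> \<sigma> lastR \<sigma>"
          unfolding tstep_def
        proof (intro conjI allI impI)
          show "lastR \<in> P2" by (simp add: P2_def N_eq)
          show "\<pi> \<in> poss s'" by (rule pi')
          show "flat (subt_at s' \<pi>) = subst \<sigma> (adp_lhs lastR)" using mtl by (simp add: lhs_simps)
          show "arg_NF P2 (subst \<sigma> (adp_lhs lastR))" using an' by (simp add: lhs_simps argNF_eq)
          show "map fst (adp_rhs lastR) = map fst (adp_rhs a)" unfolding aa lhs_simps by (rule mapfst)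
          fix i assume "i < length (adp_rhs a)"
          then have i: "i < length rs" by (simp add: aa lhs_simps)
          define r where "r = snd (rs ! i)"
          have vr: "vars r \<subseteq> vars l" using rvi[OF i] by (simp add: r_def)
          have unr: "\<forall>x\<in>vars r. flat (\<sigma> x) = \<sigma> x" using un\<sigma>l vr by blast
          have S1: "sim (NF P) (subst \<sigma> r) (subst \<sigma> (sharp_pos (C r) r))"
          proof (rule sim_subst[OF unr])
            show "flat r = flat (sharp_pos (C r) r)" by (simp add: flat_sharp)
            show "\<forall>p. ann_at r p \<and> \<not> ann_at (sharp_pos (C r) r) p \<longrightarrow> NF P (subst \<sigma> (subt_at (flat r) p))"
            proof (intro allI impI, elim conjE)
              fix p assume ap: "ann_at r p" and nap: "\<not> ann_at (sharp_pos (C r) r) p"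
              have pC: "p \<notin> capt P l \<delta>s r" using nap ann_sharp_capt unfolding C_def by blast
              have vpr: "valid_pos r p" using ap by (simp add: ann_at_iff)
              define t' where "t' = flat (subt_at r p)"
              have "ann_subterm_at t' p r" using ap by (simp add: ann_subterm_at_def t'_def)
              then have cap: "captured P l t' \<delta>s" using pC unfolding capt_def by blast
              have vt: "vars t' \<subseteq> vars l" using vars_subt[OF vpr] vr by (auto simp: t'_def)
              have "NF P (subst \<sigma> t')"
                by (rule key[OF inf cap nonin an' unfs vt _ lT]) (simp add: t'_def)
              then show "NF P (subst \<sigma> (subt_at (flat r) p))" using subt_flat[OF vpr] by (simp add: t'_def)
            qed
          qed
          have S2': "sim (\<lambda>_. False) (subst \<sigma> (sharp_pos (C r) r)) (subst \<sigma> r)"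
          proof (rule sim_subst2)
            show "\<forall>x\<in>vars (sharp_pos (C r) r). flat (\<sigma> x) = \<sigma> x" using unr by (simp add: vars_sharp)
            show "flat (sharp_pos (C r) r) = flat r" by (simp add: flat_sharp)
            show "\<forall>p. ann_at (sharp_pos (C r) r) p \<longrightarrow> ann_at r p" using sharpC by blast
          qed
          have ff: "flat (sharp_pos (C r) r) = flat r" by (simp add: flat_sharp)
          show "R1 (step_result s \<pi> \<sigma> (adp_flag a) (snd (adp_rhs a ! i)))
                   (step_result s' \<pi> \<sigma> (adp_flag lastR) (snd (adp_rhs lastR ! i)))"
          proof -
            have g: "snd (adp_rhs a ! i) = r" "snd (adp_rhs lastR ! i) = sharp_pos (C r) r" "adp_flag a = m" "adp_flag lastR = m"
              by (simp_all add: aa lhs_simps nth_map_pair[OF i] r_def)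
            show ?thesis unfolding g
            proof (cases "ann_at s \<pi>")
              case True
              then show "R1 (step_result s \<pi> \<sigma> m r) (step_result s' \<pi> \<sigma> m (sharp_pos (C r) r))"
                using S1 S2' annEq by (intro stepR) simp_all
            next
              case False
              then show "R1 (step_result s \<pi> \<sigma> m r) (step_result s' \<pi> \<sigma> m (sharp_pos (C r) r))"
                using annEq ff by (intro stepEq) simp
            qed
          qed
        next
          assume "a \<in> S \<and> ann_at s \<pi>"
          then show "lastR \<in> S2" using aa annEq by (auto simp: S2_def' N_eq)
        next
          assume "a \<in> S \<and> ann_at s \<pi>"
          then show "ann_at s' \<pi>" using annEq by simp
        qed
        then show ?thesis by blast
      qed
    qed
  qed
  define R2 where "R2 s s' \<longleftrightarrow> sim (\<lambda>_. False) s s'" for s s' :: "('f, 'v) trm"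
  have trans2: "\<exists>a' \<sigma>'. tstep P (P2 - S2) (P - S) R2 s s' a \<pi> \<sigma> a' \<sigma>'"
    if R: "R2 s s'" and a: "a \<in> P2" and pi: "\<pi> \<in> poss s" and mt: "flat (subt_at s \<pi>) = subst \<sigma> (adp_lhs a)"
      and an: "arg_NF P2 (subst \<sigma> (adp_lhs a))" for s s' a \<pi> \<sigma>
  proof -
    have R': "sim (\<lambda>_. False) s s'" using R by (simp add: R2_def)
    have fe: "flat s = flat s'" using R' by (simp add: sim_def)
    have vp: "valid_pos s \<pi>" using pi by (simp add: poss_def)
    have vp': "valid_pos s' \<pi>" using vp fe valid_flat_iff by metis
    have pi': "\<pi> \<in> poss s'" using vp' by (simp add: poss_def)
    have mt': "flat (subt_at s' \<pi>) = subst \<sigma> (adp_lhs a)"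
      using mt subt_flat[OF vp] subt_flat[OF vp'] fe by simp
    have noD: "ann_at s' p" if "ann_at s p" for p
      using R' that by (simp add: sim_def)
    have abv: "\<forall>p q. \<pi> = p @ q \<longrightarrow> q \<noteq> [] \<longrightarrow> ann_at s p \<longrightarrow> ann_at s' p" using noD by blast
    have un\<sigma>: "\<forall>x\<in>vars (adp_lhs a). flat (\<sigma> x) = \<sigma> x" by (rule unfl[OF mt])
    have stepR: "R2 (step_result s \<pi> \<sigma> mm r1) (step_result s' \<pi> \<sigma> mm r2)"
      if "\<forall>x\<in>vars r1. flat (\<sigma> x) = \<sigma> x" "flat r1 = flat r2" "\<forall>p. ann_at r1 p \<longrightarrow> ann_at r2 p" for mm r1 r2
    proof -
      have "sim (\<lambda>_. False) (subst \<sigma> (if ann_at s \<pi> then r1 else flat r1)) (subst \<sigma> (if ann_at s' \<pi> then r2 else flat r2))"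
      proof (rule sim_subst2)
        show "\<forall>x\<in>vars (if ann_at s \<pi> then r1 else flat r1). flat (\<sigma> x) = \<sigma> x" using that(1) by simp
        show "flat (if ann_at s \<pi> then r1 else flat r1) = flat (if ann_at s' \<pi> then r2 else flat r2)"
          using that(2) by simp
        show "\<forall>p. ann_at (if ann_at s \<pi> then r1 else flat r1) p \<longrightarrow> ann_at (if ann_at s' \<pi> then r2 else flat r2) p"
          using that(3) noD[of \<pi>] ann_flat[of "flat r1"] by auto
      qed
      then show ?thesis unfolding R2_def by (rule sim_step[OF R' vp abv])
    qed
    show ?thesis
    proof (cases "a \<in> P'")
      case True
      have aP: "a \<in> P" using True Pins by blast
      have "tstep P (P2 - S2) (P - S) R2 s s' a \<pi> \<sigma> a \<sigma>"
        unfolding tstep_def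
      proof (intro conjI allI impI)
        show "a \<in> P" by (rule aP)
        show "\<pi> \<in> poss s'" by (rule pi')
        show "flat (subt_at s' \<pi>) = subst \<sigma> (adp_lhs a)" by (rule mt')
        show "arg_NF P (subst \<sigma> (adp_lhs a))" using an by (simp add: argNF_eq)
        show "map fst (adp_rhs a) = map fst (adp_rhs a)" by simp
        fix i assume i: "i < length (adp_rhs a)"
        have "vars (snd (adp_rhs a ! i)) \<subseteq> vars (adp_lhs a)"
          using wfv[OF aP, of "fst (adp_rhs a ! i)" "snd (adp_rhs a ! i)"] i by simp
        then show "R2 (step_result s \<pi> \<sigma> (adp_flag a) (snd (adp_rhs a ! i))) (step_result s' \<pi> \<sigma> (adp_flag a) (snd (adp_rhs a ! i)))"
          using un\<sigma> by (intro stepR) auto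
      next
        assume "a \<in> P2 - S2 \<and> ann_at s \<pi>"
        then show "a \<in> P - S" using aP True aP' by (auto simp: S2_def' split: if_splits)
      next
        assume "a \<in> P2 - S2 \<and> ann_at s \<pi>"
        then show "ann_at s' \<pi>" using noD by simp
      qed
      then show ?thesis by blast
    next
      case False
      then have aN: "a \<in> N" using a by (simp add: P2_def)
      have cnt: "\<alpha> \<in> P - S" if "a \<in> P2 - S2"
      proof -
        have "\<alpha> \<notin> S" using that aN by (auto simp: S2_def' split: if_splits)
        then show ?thesis using Pins by simp
      qed
      from aN consider (inst) \<delta> where "\<delta> \<in> set \<delta>s" "a = instR \<delta>" | (last) "a = lastR" by (auto simp: N_eq)
      then show ?thesis
      proof cases
        case inst
        define \<sigma>' where "\<sigma>' = (\<lambda>x. subst \<sigma> (\<delta> x))"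
        have sd: "subst \<sigma>' w = subst \<sigma> (subst \<delta> w)" for w by (simp add: \<sigma>'_def subst_subst)
        have "tstep P (P2 - S2) (P - S) R2 s s' a \<pi> \<sigma> \<alpha> \<sigma>'"
          unfolding tstep_def
        proof (intro conjI allI impI)
          show "\<alpha> \<in> P" using Pins by simp
          show "\<pi> \<in> poss s'" by (rule pi')
          show "flat (subt_at s' \<pi>) = subst \<sigma>' (adp_lhs \<alpha>)" using mt' inst by (simp add: lhs_simps sd)
          show "arg_NF P (subst \<sigma>' (adp_lhs \<alpha>))" using an inst by (simp add: lhs_simps sd argNF_eq)
          show "map fst (adp_rhs \<alpha>) = map fst (adp_rhs a)" unfolding inst lhs_simps by (rule mapfst[symmetric])
          fix i assume "i < length (adp_rhs a)"
          then have i: "i < length rs" by (simp add: inst lhs_simps)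
          define r where "r = snd (rs ! i)"
          have vr: "vars r \<subseteq> vars l" using rvi[OF i] by (simp add: r_def)
          have g: "snd (adp_rhs a ! i) = subst \<delta> r" "snd (adp_rhs \<alpha> ! i) = r" "adp_flag a = m" "adp_flag \<alpha> = m"
            by (simp_all add: inst lhs_simps nth_map_pair[OF i] r_def)
          have unl: "\<forall>x\<in>vars (subst \<delta> l). flat (\<sigma> x) = \<sigma> x" using un\<sigma> inst by (simp add: lhs_simps)
          have unr: "\<forall>x\<in>vars (subst \<delta> r). flat (\<sigma> x) = \<sigma> x" using unl vr by (auto simp: vars_subst)
          have "R2 (step_result s \<pi> \<sigma> m (subst \<delta> r)) (step_result s' \<pi> \<sigma>' m r)"
          proof -
            have "sim (\<lambda>_. False) (subst \<sigma> (if ann_at s \<pi> then subst \<delta> r else flat (subst \<delta> r)))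
                    (subst \<sigma> (if ann_at s' \<pi> then subst \<delta> r else subst \<delta> (flat r)))"
            proof (rule sim_subst2)
              show "\<forall>x\<in>vars (if ann_at s \<pi> then subst \<delta> r else flat (subst \<delta> r)). flat (\<sigma> x) = \<sigma> x" using unr by simp
              have "flat (subst \<delta> (flat r)) = flat (subst \<delta> r)" by (simp add: flat_subst)
              then show "flat (if ann_at s \<pi> then subst \<delta> r else flat (subst \<delta> r)) = flat (if ann_at s' \<pi> then subst \<delta> r else subst \<delta> (flat r))"
                by simp
              show "\<forall>p. ann_at (if ann_at s \<pi> then subst \<delta> r else flat (subst \<delta> r)) p \<longrightarrow> ann_at (if ann_at s' \<pi> then subst \<delta> r else subst \<delta> (flat r)) p"
                using noD[of \<pi>] ann_flat[of "flat (subst \<delta> r)"] by auto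
            qed
            moreover have "subst \<sigma>' (if ann_at s' \<pi> then r else flat r) = subst \<sigma> (if ann_at s' \<pi> then subst \<delta> r else subst \<delta> (flat r))"
              by (simp add: sd)
            ultimately show ?thesis unfolding R2_def by (intro sim_step[OF R' vp abv]) simp
          qed
          then show "R2 (step_result s \<pi> \<sigma> (adp_flag a) (snd (adp_rhs a ! i))) (step_result s' \<pi> \<sigma>' (adp_flag \<alpha>) (snd (adp_rhs \<alpha> ! i)))"
            unfolding g .
        next
          assume "a \<in> P2 - S2 \<and> ann_at s \<pi>"
          then show "\<alpha> \<in> P - S" using cnt by blast
        next
          assume "a \<in> P2 - S2 \<and> ann_at s \<pi>"
          then show "ann_at s' \<pi>" using noD by simp
        qed
        then show ?thesis by blast
      next
        case last
        have "tstep P (P2 - S2) (P - S) R2 s s' a \<pi> \<sigma> \<alpha> \<sigma>"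
          unfolding tstep_def
        proof (intro conjI allI impI)
          show "\<alpha> \<in> P" using Pins by simp
          show "\<pi> \<in> poss s'" by (rule pi')
          show "flat (subt_at s' \<pi>) = subst \<sigma> (adp_lhs \<alpha>)" using mt' last by (simp add: lhs_simps)
          show "arg_NF P (subst \<sigma> (adp_lhs \<alpha>))" using an last by (simp add: lhs_simps argNF_eq)
          show "map fst (adp_rhs \<alpha>) = map fst (adp_rhs a)" unfolding last lhs_simps by (rule mapfst[symmetric])
          fix i assume "i < length (adp_rhs a)"
          then have i: "i < length rs" by (simp add: last lhs_simps)
          define r where "r = snd (rs ! i)"
          have vr: "vars r \<subseteq> vars l" using rvi[OF i] by (simp add: r_def)
          have g: "snd (adp_rhs a ! i) = sharp_pos (C r) r" "snd (adp_rhs \<alpha> ! i) = r" "adp_flag a = m" "adp_flag \<alpha> = m"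
            by (simp_all add: last lhs_simps nth_map_pair[OF i] r_def)
          have unr: "\<forall>x\<in>vars (sharp_pos (C r) r). flat (\<sigma> x) = \<sigma> x" using un\<sigma> last vr by (auto simp: lhs_simps vars_sharp)
          have "R2 (step_result s \<pi> \<sigma> m (sharp_pos (C r) r)) (step_result s' \<pi> \<sigma> m r)"
            by (rule stepR[OF unr]) (simp add: flat_sharp, use sharpC in blast)
          then show "R2 (step_result s \<pi> \<sigma> (adp_flag a) (snd (adp_rhs a ! i))) (step_result s' \<pi> \<sigma> (adp_flag \<alpha>) (snd (adp_rhs \<alpha> ! i)))"
            unfolding g .
        next
          assume "a \<in> P2 - S2 \<and> ann_at s \<pi>"
          then show "\<alpha> \<in> P - S" using cnt by blast
        next
          assume "a \<in> P2 - S2 \<and> ann_at s \<pi>"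
          then show "ann_at s' \<pi>" using noD by simp
        qed
        then show ?thesis by blast
      qed
    qed
  qed
  have d1: "edh P S u \<le> edh P2 S2 u" for u
  proof (rule edh_le)
    fix T assume ct: "chain_tree P T" and r: "ct_term T [] = sharp u"
    have init: "R1 (ct_term T []) (sharp u)" by (simp add: r R1_def sim_refl)
    show "\<exists>T'. chain_tree P2 T' \<and> ct_term T' [] = sharp u \<and> edl S T \<le> edl S2 T'"
      by (rule tree_sim[OF ct init trans1])
  qed
  have d2: "edh P2 (P2 - S2) u \<le> edh P (P - S) u" for u
  proof (rule edh_le)
    fix T assume ct: "chain_tree P2 T" and r: "ct_term T [] = sharp u"
    have init: "R2 (ct_term T []) (sharp u)" by (simp add: r R2_def sim_refl)
    show "\<exists>T'. chain_tree P T' \<and> ct_term T' [] = sharp u \<and> edl (P2 - S2) T \<le> edl (P - S) T'"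
      by (rule tree_sim[OF ct init trans2])
  qed
  have i1: "iota_prob F (P, S) \<le> iota_prob F (P2, S2)"
    by (rule iota_prob_mono) (simp_all add: basic_eq d1)
  have i2: "iota_prob F (P2, P2 - S2) \<le> iota_prob F (P, P - S)"
    by (rule iota_prob_mono) (simp_all add: basic_eq d2)
  have eqQ: "(P' \<union> roi_N P l rs m \<delta>s, roi_S S (l, rs, m) (roi_N P l rs m \<delta>s)) = (P2, S2)"
    by (simp add: P2_def S2_def N_def \<alpha>_def)
  show ?thesis
    unfolding sound_output_def eqQ
  proof (intro allI impI conjI)
    fix T v assume H: "proof_tree F T \<and> well_formed F T \<and> v \<in> pt_nodes T \<and> pt_LA T v = (P, S)"
    have "iota_prob F (P2, S2) \<le> Max (insert (pt_anc T v) (insert (Pol 0) (iota_prob F ` {(P2, S2)})))"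
      by (rule Max_ge) auto
    then show "iota_prob F (P, S) \<le> Max (insert (pt_anc T v) (insert (Pol 0) (iota_prob F ` {(P2, S2)})))"
      using i1 by (rule order_trans[rotated])
    have "iota_prob F (P, P - S) \<le> pt_anc T v"
      using H unfolding well_formed_def by fastforce
    then have "iota_prob F (P2, P2 - S2) \<le> max (pt_anc T v) (Pol 0)"
      using i2 by (meson order_trans max.cobounded1)
    then show "\<forall>(Pi, Si)\<in>{(P2, S2)}. iota_prob F (Pi, Pi - Si) \<le> max (pt_anc T v) (Pol 0)" by simp
  qed
qed

end
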